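(* Let $n$ and $k\ge2$ be integers with $k$ dividing $n$. Then the deterministic query complexity of the partial function $\mathrm{1vKCycle}$ on $n$ vertices satisfies $D(\mathrm{1vKCycle})\ge\frac{n^2}{128k^2}$.
   Context: Undirected graphs on vertex set $\{1,\dots,n\}$ are encoded as strings in $\{0,1\}^N$ with $N=\binom n2$, one bit per unordered pair indicating whether the edge is present. The partial function $\mathrm{1vKCycle}:\Delta\to\{0,1\}$ is defined on the set $\Delta\subseteq\{0,1\}^N$ of graphs that are either a single cycle of length $n$ (Hamiltonian cycle) or a disjoint union of $k$ cycles each of length $n/k$; it maps the former to $1$ and the latter to $0$. For a partial function $g:\Delta\to\{0,1\}$, $D(g)=\min\{D(f): f:\{0,1\}^N\to\{0,1\},\ f|_\Delta=g\}$, where $D(f)$ for total $f$ is the minimum depth of a deterministic decision tree computing $f$. *)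

theory Defs
  imports Complex_Main
begin

datatype 'i dtree = Leaf bool | Node 'i "'i dtree" "'i dtree"

fun dt_eval :: "'i dtree \<Rightarrow> ('i \<Rightarrow> bool) \<Rightarrow> bool" where
  "dt_eval (Leaf b) x = b"
| "dt_eval (Node i t0 t1) x = (if x i then dt_eval t1 x else dt_eval t0 x)"

fun dt_depth :: "'i dtree \<Rightarrow> nat" where
  "dt_depth (Leaf b) = 0"
| "dt_depth (Node i t0 t1) = Suc (max (dt_depth t0) (dt_depth t1))"

fun dt_vars :: "'i dtree \<Rightarrow> 'i set" where
  "dt_vars (Leaf b) = {}"
| "dt_vars (Node i t0 t1) = insert i (dt_vars t0 \<union> dt_vars t1)"

(* {0,1}^I, the inputs: bit strings indexed by the finite index set I
   (represented as functions that are False outside I) *)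
definition cube :: "'i set \<Rightarrow> ('i \<Rightarrow> bool) set" where
  "cube I = {x. \<forall>e. e \<notin> I \<longrightarrow> \<not> x e}"

definition Dtotal :: "'i set \<Rightarrow> (('i \<Rightarrow> bool) \<Rightarrow> bool) \<Rightarrow> nat" where
  "Dtotal I f = (LEAST d. \<exists>t. dt_vars t \<subseteq> I \<and> dt_depth t = d \<and>
                              (\<forall>x\<in>cube I. dt_eval t x = f x))"

definition Dpartial :: "'i set \<Rightarrow> ('i \<Rightarrow> bool) set \<Rightarrow> (('i \<Rightarrow> bool) \<Rightarrow> bool) \<Rightarrow> nat" where
  "Dpartial I Delta g = (LEAST d. \<exists>f. (\<forall>x\<in>Delta. f x = g x) \<and> Dtotal I f = d)"

(* The N = n choose 2 coordinates: unordered pairs of distinct vertices of {1..n} *)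
definition pairs :: "nat \<Rightarrow> nat set set" where
  "pairs n = {e. e \<subseteq> {1..n} \<and> card e = 2}"

definition cycle_edges :: "nat list \<Rightarrow> nat set set" where
  "cycle_edges vs = {{vs ! i, vs ! ((i + 1) mod length vs)} | i. i < length vs}"

definition union_of_cycles :: "nat \<Rightarrow> nat \<Rightarrow> nat \<Rightarrow> (nat set \<Rightarrow> bool) \<Rightarrow> bool" where
  "union_of_cycles n k L x \<longleftrightarrow> x \<in> cube (pairs n) \<and> 3 \<le> L \<and>
     (\<exists>vss. length vss = k \<and> (\<forall>vs\<in>set vss. length vs = L) \<and>
            distinct (concat vss) \<and> set (concat vss) = {1..n} \<and>
            {e. x e} = (\<Union>vs\<in>set vss. cycle_edges vs))"

definition ham_cycle :: "nat \<Rightarrow> (nat set \<Rightarrow> bool) \<Rightarrow> bool" where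
  "ham_cycle n x \<longleftrightarrow> union_of_cycles n 1 n x"

definition Delta_1vK :: "nat \<Rightarrow> nat \<Rightarrow> (nat set \<Rightarrow> bool) set" where
  "Delta_1vK n k = {x. ham_cycle n x \<or> union_of_cycles n k (n div k) x}"

(* 1vKCycle: 1 on Hamiltonian cycles, 0 on unions of k cycles (only meaningful on Delta) *)
definition one_v_k_cycle :: "nat \<Rightarrow> (nat set \<Rightarrow> bool) \<Rightarrow> bool" where
  "one_v_k_cycle n x = ham_cycle n x"

end

theory Submission
  imports Defs
begin

locale lay = fixes k L m :: nat
  assumes k2: "2 \<le> k" and m1: "1 \<le> m" and mL: "2*m < L" and Lm: "L \<le> 2*m+2"
begin

definition seq :: "(nat \<Rightarrow> nat) \<Rightarrow> nat \<Rightarrow> nat" where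
  "seq \<pi> p = (if p < 2*m then (if even p then p div 2 else m + \<pi> (p div 2)) else p)"
definition off :: "nat \<Rightarrow> nat \<Rightarrow> nat \<Rightarrow> nat" where
  "off a t p = (if p < 2*m \<and> even p then (if p div 2 = a then t else 1) else 0)"
definition vtx :: "nat \<Rightarrow> nat \<Rightarrow> nat" where
  "vtx s l = Suc (s + k*l)"
definition Gr :: "(nat \<Rightarrow> nat) \<Rightarrow> nat \<Rightarrow> nat \<Rightarrow> nat set set" where
  "Gr \<pi> a t = {e. \<exists>s<k. \<exists>p<L. e = {vtx s (seq \<pi> p), vtx ((s + off a t p) mod k) (seq \<pi> (Suc p mod L))}}"
definition DD :: "(nat \<Rightarrow> nat) \<Rightarrow> nat \<Rightarrow> nat \<Rightarrow> nat \<Rightarrow> nat \<Rightarrow> nat \<Rightarrow> nat \<Rightarrow> bool" where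
  "DD \<pi> a t l s l' s' = (\<exists>p<L. seq \<pi> p = l \<and> seq \<pi> (Suc p mod L) = l' \<and> s' = (s + off a t p) mod k)"
definition perm :: "(nat \<Rightarrow> nat) \<Rightarrow> bool" where
  "perm \<pi> = bij_betw \<pi> {..<m} {..<m}"

lemma vtx_inj: "s < k \<Longrightarrow> s' < k \<Longrightarrow> vtx s l = vtx s' l' \<longleftrightarrow> s = s' \<and> l = l'"
proof
  assume a: "s < k" "s' < k" "vtx s l = vtx s' l'"
  then have e: "s + k*l = s' + k*l'" by (simp add: vtx_def)
  then have "(s + k*l) mod k = (s' + k*l') mod k" by simp
  then have "s = s'" using a by simp
  then show "s = s' \<and> l = l'" using e k2 by simp
qed simp

lemma perm_lt: "perm \<pi> \<Longrightarrow> i < m \<Longrightarrow> \<pi> i < m"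
  unfolding perm_def bij_betw_def by auto

lemma seq_lt: "perm \<pi> \<Longrightarrow> p < L \<Longrightarrow> seq \<pi> p < L"
proof -
  assume a: "perm \<pi>" "p < L"
  show ?thesis
  proof (cases "p < 2*m")
    case True
    then have "p div 2 < m" by auto
    then have "\<pi> (p div 2) < m" using perm_lt a by auto
    then show ?thesis using True mL unfolding seq_def by auto
  qed (use a in \<open>auto simp: seq_def\<close>)
qed

lemma seq_inj: assumes "perm \<pi>" shows "inj_on (seq \<pi>) {..<L}"
proof
  fix p q assume p: "p \<in> {..<L}" and q: "q \<in> {..<L}" and e: "seq \<pi> p = seq \<pi> q"
  have inj: "inj_on \<pi> {..<m}" using assms unfolding perm_def bij_betw_def by auto
  have lt: "\<And>i. i < m \<Longrightarrow> \<pi> i < m" using perm_lt assms by auto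
  show "p = q"
  proof (cases "p < 2*m")
    case True
    show ?thesis
    proof (cases "q < 2*m")
      case True2: True
      show ?thesis
      proof (cases "even p")
        case ep: True
        show ?thesis
        proof (cases "even q")
          case True
          then show ?thesis using e ep True2 \<open>p<2*m\<close> unfolding seq_def
            by auto
        next
          case False
          have "p div 2 < m" using \<open>p<2*m\<close> by auto
          then show ?thesis using e ep False True2 \<open>p<2*m\<close> unfolding seq_def by auto
        qed
      next
        case op: False
        show ?thesis
        proof (cases "even q")
          case True
          have "q div 2 < m" using True2 by auto
          then show ?thesis using e op True True2 \<open>p<2*m\<close> unfolding seq_def by auto
        next
          case False
          have "p div 2 < m" "q div 2 < m" using True2 \<open>p<2*m\<close> by auto
          then have "p div 2 = q div 2" using e op False True2 \<open>p<2*m\<close> inj unfolding seq_def inj_on_def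
            by auto
          moreover have "p = 2*(p div 2) + 1" "q = 2*(q div 2) + 1" using op False by auto
          ultimately show ?thesis by simp
        qed
      qed
    next
      case False
      have "seq \<pi> p < 2*m" using True lt[of "p div 2"] unfolding seq_def by auto
      then show ?thesis using e False unfolding seq_def by auto
    qed
  next
    case False
    show ?thesis
    proof (cases "q < 2*m")
      case True
      have "seq \<pi> q < 2*m" using True lt[of "q div 2"] unfolding seq_def by auto
      then show ?thesis using e False unfolding seq_def by auto
    next
      case False2: False
      then show ?thesis using e False unfolding seq_def by auto
    qed
  qed
qed

lemma seq_surj: assumes "perm \<pi>" "l < L" shows "\<exists>p<L. seq \<pi> p = l"
proof -
  consider "l < m" | "m \<le> l \<and> l < 2*m" | "2*m \<le> l" by linarith
  then show ?thesis
  proof cases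
    case 1 then show ?thesis using mL by (intro exI[of _ "2*l"]) (auto simp: seq_def)
  next
    case 2
    then obtain i where i: "i < m" "\<pi> i = l - m" using assms(1) unfolding perm_def bij_betw_def
      by (metis imageE lessThan_iff mult_2 not_le less_diff_conv2)
    show ?thesis using i 2 mL by (intro exI[of _ "2*i+1"]) (auto simp: seq_def)
  next
    case 3 then show ?thesis using assms by (intro exI[of _ l]) (auto simp: seq_def)
  qed
qed

lemma Gr_mem: assumes "s < k" "s' < k"
  shows "{vtx s l, vtx s' l'} \<in> Gr \<pi> a t \<longleftrightarrow> DD \<pi> a t l s l' s' \<or> DD \<pi> a t l' s' l s"
proof
  assume "{vtx s l, vtx s' l'} \<in> Gr \<pi> a t"
  then obtain s0 p where sp: "s0 < k" "p < L"
    "{vtx s l, vtx s' l'} = {vtx s0 (seq \<pi> p), vtx ((s0 + off a t p) mod k) (seq \<pi> (Suc p mod L))}"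
    unfolding Gr_def by auto
  have k0: "0 < k" using k2 by auto
  have s1: "(s0 + off a t p) mod k < k" using k0 by auto
  from sp(3) consider "vtx s l = vtx s0 (seq \<pi> p) \<and> vtx s' l' = vtx ((s0 + off a t p) mod k) (seq \<pi> (Suc p mod L))"
    | "vtx s l = vtx ((s0 + off a t p) mod k) (seq \<pi> (Suc p mod L)) \<and> vtx s' l' = vtx s0 (seq \<pi> p)"
    by (auto simp: doubleton_eq_iff)
  then show "DD \<pi> a t l s l' s' \<or> DD \<pi> a t l' s' l s"
  proof cases
    case 1
    then have "s = s0" "l = seq \<pi> p" "s' = (s0 + off a t p) mod k" "l' = seq \<pi> (Suc p mod L)"
      using vtx_inj[OF assms(1) sp(1)] vtx_inj[OF assms(2) s1] by auto
    then show ?thesis unfolding DD_def using sp(2) by auto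
  next
    case 2
    then have "s' = s0" "l' = seq \<pi> p" "s = (s0 + off a t p) mod k" "l = seq \<pi> (Suc p mod L)"
      using vtx_inj[OF assms(2) sp(1)] vtx_inj[OF assms(1) s1] by auto
    then show ?thesis unfolding DD_def using sp(2) by auto
  qed
next
  assume "DD \<pi> a t l s l' s' \<or> DD \<pi> a t l' s' l s"
  then show "{vtx s l, vtx s' l'} \<in> Gr \<pi> a t"
  proof
    assume "DD \<pi> a t l s l' s'"
    then obtain p where "p < L" "seq \<pi> p = l" "seq \<pi> (Suc p mod L) = l'" "s' = (s + off a t p) mod k"
      unfolding DD_def by auto
    then show ?thesis unfolding Gr_def using assms by blast
  next
    assume "DD \<pi> a t l' s' l s"
    then obtain p where "p < L" "seq \<pi> p = l'" "seq \<pi> (Suc p mod L) = l" "s = (s' + off a t p) mod k"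
      unfolding DD_def by auto
    then have "{vtx s l, vtx s' l'} = {vtx s' (seq \<pi> p), vtx ((s' + off a t p) mod k) (seq \<pi> (Suc p mod L))}"
      by auto
    then show ?thesis unfolding Gr_def using assms \<open>p < L\<close> by blast
  qed
qed

lemma DD_X: assumes "perm \<pi>" "l < m"
  shows "DD \<pi> a t l s l' s' \<longleftrightarrow> l' = m + \<pi> l \<and> s' = (s + (if l = a then t else 1)) mod k"
proof
  assume "DD \<pi> a t l s l' s'"
  then obtain p where p: "p < L" "seq \<pi> p = l" "seq \<pi> (Suc p mod L) = l'" "s' = (s + off a t p) mod k"
    unfolding DD_def by auto
  have "p < 2*m"
  proof (rule ccontr)
    assume "\<not> p < 2*m" then have "seq \<pi> p = p" unfolding seq_def by auto
    then show False using p(2) \<open>\<not> p < 2*m\<close> assms(2) by auto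
  qed
  have "even p"
  proof (rule ccontr)
    assume "odd p" then have "seq \<pi> p = m + \<pi> (p div 2)" using \<open>p<2*m\<close> unfolding seq_def by auto
    then show False using p(2) assms(2) by auto
  qed
  then have pe: "p = 2*l" using p(2) \<open>p<2*m\<close> unfolding seq_def by auto
  have "Suc p mod L = Suc p" using pe assms mL by auto
  then have "l' = m + \<pi> l" using p(3) pe assms mL unfolding seq_def by auto
  moreover have "off a t p = (if l = a then t else 1)" using pe assms unfolding off_def by auto
  ultimately show "l' = m + \<pi> l \<and> s' = (s + (if l = a then t else 1)) mod k" using p(4) by auto
next
  assume h: "l' = m + \<pi> l \<and> s' = (s + (if l = a then t else 1)) mod k"
  have "2*l < L" "Suc (2*l) mod L = Suc (2*l)" using assms mL by auto
  moreover have "seq \<pi> (2*l) = l" "seq \<pi> (Suc (2*l)) = m + \<pi> l" "off a t (2*l) = (if l = a then t else 1)"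
    using assms unfolding seq_def off_def by auto
  ultimately show "DD \<pi> a t l s l' s'" unfolding DD_def using h by (intro exI[of _ "2*l"]) auto
qed

lemma DD_Y: assumes "perm \<pi>" "m \<le> l" "l < 2*m" "s < k"
  shows "DD \<pi> a t l s l' s' \<longleftrightarrow> (\<exists>i<m. \<pi> i = l - m \<and> l' = (if Suc i < m then Suc i else 2*m)) \<and> s' = s"
proof
  assume "DD \<pi> a t l s l' s'"
  then obtain p where p: "p < L" "seq \<pi> p = l" "seq \<pi> (Suc p mod L) = l'" "s' = (s + off a t p) mod k"
    unfolding DD_def by auto
  have "p < 2*m"
  proof (rule ccontr)
    assume "\<not> p < 2*m" then have "seq \<pi> p = p" unfolding seq_def by auto
    then show False using p(2) \<open>\<not> p < 2*m\<close> assms by auto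
  qed
  have "odd p"
  proof (rule ccontr)
    assume "\<not> odd p" then have "seq \<pi> p = p div 2" using \<open>p<2*m\<close> unfolding seq_def by auto
    then show False using p(2) assms \<open>p<2*m\<close> by auto
  qed
  define i where "i = p div 2"
  have pi: "p = 2*i+1" "i < m" using \<open>odd p\<close> \<open>p<2*m\<close> unfolding i_def by auto
  have "\<pi> i = l - m" using p(2) pi \<open>p<2*m\<close> unfolding seq_def by auto
  moreover have "Suc p mod L = Suc p" using pi mL by auto
  moreover have "seq \<pi> (Suc p) = (if Suc i < m then Suc i else 2*m)" using pi unfolding seq_def by auto
  moreover have "off a t p = 0" using \<open>odd p\<close> unfolding off_def by auto
  ultimately show "(\<exists>i<m. \<pi> i = l - m \<and> l' = (if Suc i < m then Suc i else 2*m)) \<and> s' = s"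
    using p pi assms by auto
next
  assume "(\<exists>i<m. \<pi> i = l - m \<and> l' = (if Suc i < m then Suc i else 2*m)) \<and> s' = s"
  then obtain i where i: "i < m" "\<pi> i = l - m" "l' = (if Suc i < m then Suc i else 2*m)" "s' = s" by auto
  have "2*i+1 < L" "Suc (2*i+1) mod L = Suc (2*i+1)" using i mL by auto
  moreover have "seq \<pi> (2*i+1) = l" using i assms unfolding seq_def by auto
  moreover have "seq \<pi> (Suc (2*i+1)) = l'" using i unfolding seq_def by auto
  moreover have "off a t (2*i+1) = 0" unfolding off_def by auto
  moreover have "s mod k = s" using assms by auto
  ultimately show "DD \<pi> a t l s l' s'" unfolding DD_def using i
    by (intro exI[of _ "2*i+1"]) (auto)
qed

lemma DD_Z: assumes "perm \<pi>" "2*m \<le> l" "l < L" "s < k"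
  shows "DD \<pi> a t l s l' s' \<longleftrightarrow> l' = (if Suc l < L then Suc l else 0) \<and> s' = s"
proof
  assume "DD \<pi> a t l s l' s'"
  then obtain p where p: "p < L" "seq \<pi> p = l" "seq \<pi> (Suc p mod L) = l'" "s' = (s + off a t p) mod k"
    unfolding DD_def by auto
  have "\<not> p < 2*m"
  proof
    assume "p < 2*m"
    then have "p div 2 < m" by auto
    then have "\<pi> (p div 2) < m" using perm_lt assms by auto
    then have "seq \<pi> p < 2*m" using \<open>p < 2*m\<close> unfolding seq_def by auto
    then show False using p(2) assms by auto
  qed
  then have pl: "p = l" using p(2) unfolding seq_def by auto
  have "off a t p = 0" using \<open>\<not> p < 2*m\<close> unfolding off_def by auto
  moreover have "seq \<pi> (Suc p mod L) = (if Suc l < L then Suc l else 0)"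
  proof (cases "Suc l < L")
    case True then show ?thesis using pl \<open>\<not> p < 2*m\<close> unfolding seq_def by auto
  next
    case False then have "Suc l = L" using assms by auto
    then show ?thesis using pl m1 unfolding seq_def by auto
  qed
  ultimately show "l' = (if Suc l < L then Suc l else 0) \<and> s' = s" using p assms by auto
next
  assume h: "l' = (if Suc l < L then Suc l else 0) \<and> s' = s"
  have "seq \<pi> l = l" "off a t l = 0" using assms unfolding seq_def off_def by auto
  moreover have "seq \<pi> (Suc l mod L) = (if Suc l < L then Suc l else 0)"
  proof (cases "Suc l < L")
    case True then show ?thesis using assms unfolding seq_def by auto
  next
    case False then have "Suc l = L" using assms by auto
    then show ?thesis using m1 unfolding seq_def by auto
  qed
  ultimately show "DD \<pi> a t l s l' s'" unfolding DD_def using h assms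
    by (intro exI[of _ l]) auto
qed

definition PF :: "nat set \<Rightarrow> bool" where
  "PF e = (\<exists>a<m. \<exists>j<m. (\<exists>b. \<forall>\<pi> a' t. perm \<pi> \<longrightarrow> a' < m \<longrightarrow> \<not>(a' = a \<and> \<pi> a = j) \<longrightarrow> (e \<in> Gr \<pi> a' t) = b)
     \<or> (\<exists>c<m. \<exists>d<m. \<forall>\<pi> a' t. perm \<pi> \<longrightarrow> a' < m \<longrightarrow> \<not>(a' = a \<and> \<pi> a = j) \<longrightarrow> (e \<in> Gr \<pi> a' t) = (\<pi> c = d)))"

lemma PF_constQ: assumes "a < m" "j < m"
   "\<And>\<pi> a' t. perm \<pi> \<Longrightarrow> a' < m \<Longrightarrow> \<not>(a' = a \<and> \<pi> a = j) \<Longrightarrow> (e \<in> Gr \<pi> a' t) = b" shows "PF e"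
proof -
  have H: "\<forall>\<pi> a' t. perm \<pi> \<longrightarrow> a' < m \<longrightarrow> \<not>(a' = a \<and> \<pi> a = j) \<longrightarrow> (e \<in> Gr \<pi> a' t) = b"
    using assms(3) by blast
  show ?thesis unfolding PF_def
    apply (rule exI[of _ a], rule conjI[OF assms(1)], rule exI[of _ j], rule conjI[OF assms(2)])
    apply (rule disjI1, rule exI[of _ b])
    using H by assumption
qed

lemma PF_const: assumes "(\<And>\<pi> a' t. perm \<pi> \<Longrightarrow> (e \<in> Gr \<pi> a' t) = b)" shows "PF e"
  using m1 assms by (intro PF_constQ[of 0 0 _ b]) auto

lemma PF_cell: assumes "a < m" "j < m" "c < m" "d < m"
   "\<And>\<pi> a' t. perm \<pi> \<Longrightarrow> a' < m \<Longrightarrow> \<not>(a' = a \<and> \<pi> a = j) \<Longrightarrow> (e \<in> Gr \<pi> a' t) = (\<pi> c = d)" shows "PF e"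
proof -
  have H: "\<forall>\<pi> a' t. perm \<pi> \<longrightarrow> a' < m \<longrightarrow> \<not>(a' = a \<and> \<pi> a = j) \<longrightarrow> (e \<in> Gr \<pi> a' t) = (\<pi> c = d)"
    using assms(5) by blast
  show ?thesis unfolding PF_def
    apply (rule exI[of _ a], rule conjI[OF assms(1)], rule exI[of _ j], rule conjI[OF assms(2)])
    apply (rule disjI2, rule exI[of _ c], rule conjI[OF assms(3)], rule exI[of _ d], rule conjI[OF assms(4)])
    using H by assumption
qed

lemma suc_mod_ne: "s < k \<Longrightarrow> (s + 1) mod k \<noteq> s"
proof (cases "s + 1 < k")
  case True then show ?thesis by auto
next
  case False
  assume "s < k"
  then have "s + 1 = k" using False by auto
  then show ?thesis using k2 by auto
qed

lemma PF_core: assumes s: "s < k" "s' < k" and l: "l \<le> l'" "l' < L"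
  shows "PF {vtx s l, vtx s' l'}"
proof -
  let ?e = "{vtx s l, vtx s' l'}"
  have G: "\<And>\<pi> a t. (?e \<in> Gr \<pi> a t) = (DD \<pi> a t l s l' s' \<or> DD \<pi> a t l' s' l s)"
    using Gr_mem s by auto
  have sk: "s mod k = s" "s' mod k = s'" using s by auto
  have k0: "(s + 1) mod k \<noteq> s" using suc_mod_ne s by auto
  consider "l' < m" | "l < m \<and> m \<le> l' \<and> l' < 2*m" | "l < m \<and> 2*m \<le> l'"
    | "m \<le> l \<and> l' < 2*m" | "m \<le> l \<and> l < 2*m \<and> 2*m \<le> l'" | "2*m \<le> l" by linarith
  then show ?thesis
  proof cases
    case 1
    show ?thesis
    proof (rule PF_const[where b=False])
      fix \<pi> a' t assume p: "perm \<pi>"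
      show "(?e \<in> Gr \<pi> a' t) = False" unfolding G using DD_X[OF p] 1 l by auto
    qed
  next
    case 2
    have Y: "\<And>\<pi> a' t. perm \<pi> \<Longrightarrow> DD \<pi> a' t l' s' l s \<longleftrightarrow> s' = s \<and> 1 \<le> l \<and> \<pi> (l - 1) = l' - m"
    proof -
      fix \<pi> a' t assume p: "perm \<pi>"
      have "DD \<pi> a' t l' s' l s \<longleftrightarrow> (\<exists>i<m. \<pi> i = l' - m \<and> l = (if Suc i < m then Suc i else 2*m)) \<and> s = s'"
        using DD_Y[OF p, of l' s' a' t l s] 2 s by auto
      also have "\<dots> \<longleftrightarrow> s' = s \<and> 1 \<le> l \<and> \<pi> (l - 1) = l' - m"
      proof
        assume "(\<exists>i<m. \<pi> i = l' - m \<and> l = (if Suc i < m then Suc i else 2*m)) \<and> s = s'"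
        then obtain i where "i<m" "\<pi> i = l' - m" "l = (if Suc i < m then Suc i else 2*m)" "s = s'" by auto
        then show "s' = s \<and> 1 \<le> l \<and> \<pi> (l - 1) = l' - m" using 2 by (auto split: if_splits)
      next
        assume "s' = s \<and> 1 \<le> l \<and> \<pi> (l - 1) = l' - m"
        then show "(\<exists>i<m. \<pi> i = l' - m \<and> l = (if Suc i < m then Suc i else 2*m)) \<and> s = s'"
          using 2 by (intro conjI exI[of _ "l - 1"]) auto
      qed
      finally show "DD \<pi> a' t l' s' l s \<longleftrightarrow> s' = s \<and> 1 \<le> l \<and> \<pi> (l - 1) = l' - m" .
    qed
    have X: "\<And>\<pi> a' t. perm \<pi> \<Longrightarrow> \<not>(a' = l \<and> \<pi> l = l' - m) \<Longrightarrow>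
        DD \<pi> a' t l s l' s' \<longleftrightarrow> \<pi> l = l' - m \<and> s' = (s + 1) mod k"
      using DD_X 2 by auto
    show ?thesis
    proof (cases "s' = (s + 1) mod k")
      case True
      show ?thesis
      proof (rule PF_cell[of l "l' - m" l "l' - m"])
        fix \<pi> a' t assume p: "perm \<pi>" "a' < m" "\<not> (a' = l \<and> \<pi> l = l' - m)"
        show "(?e \<in> Gr \<pi> a' t) = (\<pi> l = l' - m)" unfolding G using X[OF p(1) p(3)] Y[OF p(1)] True k0
          by auto
      qed (use 2 in auto)
    next
      case F1: False
      show ?thesis
      proof (cases "s' = s \<and> 1 \<le> l")
        case True
        show ?thesis
        proof (rule PF_cell[of l "l' - m" "l - 1" "l' - m"])
          fix \<pi> a' t assume p: "perm \<pi>" "a' < m" "\<not> (a' = l \<and> \<pi> l = l' - m)"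
          show "(?e \<in> Gr \<pi> a' t) = (\<pi> (l - 1) = l' - m)" unfolding G using X[OF p(1) p(3)] Y[OF p(1)] True F1
            by auto
        qed (use 2 in auto)
      next
        case F2: False
        show ?thesis
        proof (rule PF_constQ[of l "l' - m" _ False])
          fix \<pi> a' t assume p: "perm \<pi>" "a' < m" "\<not> (a' = l \<and> \<pi> l = l' - m)"
          show "(?e \<in> Gr \<pi> a' t) = False" unfolding G using X[OF p(1) p(3)] Y[OF p(1)] F1 F2
            by auto
        qed (use 2 in auto)
      qed
    qed
  next
    case 3
    show ?thesis
    proof (rule PF_const[where b="l = (if Suc l' < L then Suc l' else 0) \<and> s = s'"])
      fix \<pi> a' t assume p: "perm \<pi>"
      show "(?e \<in> Gr \<pi> a' t) = (l = (if Suc l' < L then Suc l' else 0) \<and> s = s')" unfolding G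
        using DD_X[OF p, of l a' t s l' s'] DD_Z[OF p, of l' s' a' t l s] 3 l s perm_lt[OF p, of l] by auto
    qed
  next
    case 4
    show ?thesis
    proof (rule PF_const[where b=False])
      fix \<pi> a' t assume p: "perm \<pi>"
      show "(?e \<in> Gr \<pi> a' t) = False" unfolding G
        using DD_Y[OF p, of l s a' t l' s'] DD_Y[OF p, of l' s' a' t l s] 4 l s by auto
    qed
  next
    case 5
    show ?thesis
    proof (cases "l' = 2*m \<and> s' = s")
      case True
      show ?thesis
      proof (rule PF_cell[of 0 0 "m - 1" "l - m"])
        fix \<pi> a' t assume p: "perm \<pi>"
        have "DD \<pi> a' t l s l' s' \<longleftrightarrow> \<pi> (m - 1) = l - m"
        proof -
          have "DD \<pi> a' t l s l' s' \<longleftrightarrow> (\<exists>i<m. \<pi> i = l - m \<and> l' = (if Suc i < m then Suc i else 2*m))"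
            using DD_Y[OF p, of l s a' t l' s'] 5 True s by auto
          also have "\<dots> \<longleftrightarrow> \<pi> (m - 1) = l - m"
          proof
            assume "\<exists>i<m. \<pi> i = l - m \<and> l' = (if Suc i < m then Suc i else 2*m)"
            then obtain i where i: "i<m" "\<pi> i = l - m" "l' = (if Suc i < m then Suc i else 2*m)" by auto
            have "\<not> Suc i < m" using i(3) 5 by (auto split: if_splits)
            then have "i = m - 1" using i(1) by linarith
            then show "\<pi> (m - 1) = l - m" using i by auto
          next
            assume "\<pi> (m - 1) = l - m"
            then show "\<exists>i<m. \<pi> i = l - m \<and> l' = (if Suc i < m then Suc i else 2*m)"
              using True m1 by (intro exI[of _ "m - 1"]) auto
          qed
          finally show ?thesis .
        qed
        moreover have "\<not> DD \<pi> a' t l' s' l s" using DD_Z[OF p, of l' s' a' t l s] 5 l s by auto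
        ultimately show "(?e \<in> Gr \<pi> a' t) = (\<pi> (m - 1) = l - m)" unfolding G by auto
      qed (use 5 m1 in auto)
    next
      case False
      show ?thesis
      proof (rule PF_const[where b=False])
        fix \<pi> a' t assume p: "perm \<pi>"
        show "(?e \<in> Gr \<pi> a' t) = False" unfolding G
          using DD_Y[OF p, of l s a' t l' s'] DD_Z[OF p, of l' s' a' t l s] 5 l s False
          by (auto split: if_splits)
      qed
    qed
  next
    case 6
    show ?thesis
    proof (rule PF_const[where b="(l' = (if Suc l < L then Suc l else 0) \<and> s' = s) \<or>
          (l = (if Suc l' < L then Suc l' else 0) \<and> s = s')"])
      fix \<pi> a' t assume p: "perm \<pi>"
      show "(?e \<in> Gr \<pi> a' t) = ((l' = (if Suc l < L then Suc l else 0) \<and> s' = s) \<or>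
          (l = (if Suc l' < L then Suc l' else 0) \<and> s = s'))" unfolding G
        using DD_Z[OF p, of l s a' t l' s'] DD_Z[OF p, of l' s' a' t l s] 6 l s by auto
    qed
  qed
qed

lemma decode: assumes "1 \<le> u" "u \<le> k*L" shows "\<exists>s<k. \<exists>l<L. u = vtx s l"
proof -
  have k0: "0 < k" using k2 by auto
  define s where "s = (u - 1) mod k"
  define l where "l = (u - 1) div k"
  have "u - 1 = s + k*l" unfolding s_def l_def by simp
  then have "u = vtx s l" unfolding vtx_def using assms by auto
  moreover have "s < k" unfolding s_def using k0 by auto
  moreover have "l < L"
  proof -
    have "u - 1 < k*L" using assms by auto
    then show ?thesis unfolding l_def using k0 by (simp add: div_less_iff_less_mult mult.commute)
  qed
  ultimately show ?thesis by blast
qed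

lemma pair_form: assumes "e \<in> pairs (k*L)" shows "PF e"
proof -
  have "card e = 2" "e \<subseteq> {1..k*L}" using assms unfolding pairs_def by auto
  then obtain u w where uw: "e = {u, w}" "u \<noteq> w" by (auto simp: card_2_iff)
  then have "u \<in> {1..k*L}" "w \<in> {1..k*L}" using \<open>e \<subseteq> _\<close> by auto
  then obtain s l s' l' where sl: "s < k" "l < L" "u = vtx s l" "s' < k" "l' < L" "w = vtx s' l'"
    using decode by (meson atLeastAtMost_iff)
  show ?thesis
  proof (cases "l \<le> l'")
    case True then show ?thesis using PF_core[of s s' l l'] sl uw by auto
  next
    case False
    then have "PF {vtx s' l', vtx s l}" using PF_core[of s' s l' l] sl by auto
    then show ?thesis using sl uw by (simp add: insert_commute)
  qed
qed

end

context lay begin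

definition gs :: "nat \<Rightarrow> nat \<Rightarrow> nat \<Rightarrow> nat" where "gs a t p = (\<Sum>q<p. off a t q)"
definition hv :: "(nat \<Rightarrow> nat) \<Rightarrow> nat \<Rightarrow> nat \<Rightarrow> nat \<Rightarrow> nat" where
  "hv \<pi> a t i = vtx ((i div L + gs a t (i mod L)) mod k) (seq \<pi> (i mod L))"
definition cv :: "(nat \<Rightarrow> nat) \<Rightarrow> nat \<Rightarrow> nat \<Rightarrow> nat \<Rightarrow> nat \<Rightarrow> nat" where
  "cv \<pi> a t c p = vtx ((c + gs a t p) mod k) (seq \<pi> p)"

lemma L0: "0 < L" using mL by auto
lemma k0: "0 < k" using k2 by auto

lemma gs_Suc: "gs a t (Suc p) = gs a t p + off a t p"
  unfolding gs_def by simp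

lemma gs0: "gs a t 0 = 0" unfolding gs_def by simp

lemma seq0: "seq \<pi> 0 = 0" using m1 unfolding seq_def by auto

lemma hv_step: assumes "gs a t L mod k = 1"
  shows "hv \<pi> a t (Suc i) = vtx (((i div L + gs a t (i mod L)) mod k + off a t (i mod L)) mod k) (seq \<pi> (Suc (i mod L) mod L))"
proof (cases "Suc (i mod L) < L")
  case True
  have "Suc i mod L = Suc (i mod L)" "Suc i div L = i div L"
    using True L0 by (auto simp: mod_Suc div_Suc)
  then show ?thesis unfolding hv_def using True
    by (simp add: gs_Suc mod_add_left_eq add.assoc)
next
  case False
  then have e: "Suc (i mod L) = L" using L0 by (meson Suc_lessI mod_less_divisor)
  then have "Suc i mod L = 0" "Suc i div L = Suc (i div L)"
    using L0 by (auto simp: mod_Suc div_Suc)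
  moreover have "((i div L + gs a t (i mod L)) mod k + off a t (i mod L)) mod k = (i div L + gs a t L) mod k"
    by (metis e gs_Suc mod_add_left_eq add.assoc)
  moreover have "(i div L + gs a t L) mod k = (Suc (i div L)) mod k"
    using assms by (metis Suc_eq_plus1 mod_add_right_eq)
  ultimately show ?thesis unfolding hv_def using e by (simp add: gs0)
qed

lemma cv_step: assumes "gs a t L mod k = 0" "p < L" "c < k"
  shows "cv \<pi> a t c (Suc p mod L) = vtx (((c + gs a t p) mod k + off a t p) mod k) (seq \<pi> (Suc p mod L))"
proof (cases "Suc p < L")
  case True
  then show ?thesis unfolding cv_def by (simp add: gs_Suc mod_add_left_eq add.assoc)
next
  case False
  then have e: "Suc p = L" using assms by auto
  have "((c + gs a t p) mod k + off a t p) mod k = (c + gs a t L) mod k"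
    by (metis e gs_Suc mod_add_left_eq add.assoc)
  also have "\<dots> = c" using assms by (metis add.right_neutral mod_add_right_eq mod_less)
  finally show ?thesis unfolding cv_def using e assms by (simp add: gs0)
qed

lemma mod_unshift: "((a + c) mod k + (k - c mod k)) mod k = a mod k"
proof -
  have c: "c = c mod k + k*(c div k)" by simp
  have le: "c mod k \<le> k" using k0 by (simp add: less_imp_le)
  have "((a + c) mod k + (k - c mod k)) mod k = (a + c + (k - c mod k)) mod k"
    by (simp add: mod_add_left_eq)
  also have "a + c + (k - c mod k) = a + k*(c div k + 1)"
  proof -
    have "k*(c div k + 1) = k*(c div k) + k" by simp
    then show ?thesis using le c by linarith
  qed
  also have "(a + k*(c div k + 1)) mod k = a mod k" by (rule mod_mult_self2)
  finally show ?thesis .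
qed

lemma mod_cancel_add: "(a + c) mod k = (b + c) mod k \<Longrightarrow> a mod k = b mod k"
  by (metis mod_unshift)

lemma hit: assumes "s < k" shows "((s + (k - g mod k)) mod k + g) mod k = s"
proof -
  have "((s + (k - g mod k)) mod k + g) mod k = ((s + (k - g mod k)) + g) mod k"
    by (rule mod_add_left_eq)
  also have "\<dots> = (s + g + (k - g mod k)) mod k" by (simp add: ac_simps)
  also have "\<dots> = ((s + g) mod k + (k - g mod k)) mod k" by (simp add: mod_add_left_eq)
  also have "\<dots> = s" using mod_unshift[of s g] assms by simp
  finally show ?thesis .
qed

lemma vtx_range: "s < k \<Longrightarrow> l < L \<Longrightarrow> vtx s l \<in> {1..k*L}"
proof -
  assume a: "s < k" "l < L"
  have "s + k*l < k + k*l" using a by auto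
  also have "k + k*l = k*(Suc l)" by simp
  also have "\<dots> \<le> k*L" using a by (intro mult_le_mono2) auto
  finally show ?thesis unfolding vtx_def by auto
qed

lemma hv_range: "perm \<pi> \<Longrightarrow> hv \<pi> a t i \<in> {1..k*L}"
  unfolding hv_def using vtx_range seq_lt L0 k0 by auto

lemma hv_hit: assumes "s < k" "p < L"
  shows "\<exists>i<k*L. i mod L = p \<and> (i div L + gs a t p) mod k = s"
proof -
  define r where "r = (s + (k - gs a t p mod k)) mod k"
  have r: "r < k" unfolding r_def using k0 by auto
  define i where "i = r*L + p"
  have "i mod L = p" unfolding i_def using assms by simp
  have "i div L = r" unfolding i_def using assms by simp
  moreover have "i < k*L"
  proof -
    have "i < r*L + L" unfolding i_def using assms by auto
    also have "r*L + L = (Suc r)*L" by simp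
    also have "\<dots> \<le> k*L" using r by (intro mult_le_mono1) auto
    finally show ?thesis .
  qed
  moreover have "(r + gs a t p) mod k = s" unfolding r_def using hit assms by simp
  ultimately show ?thesis using \<open>i mod L = p\<close> by blast
qed

lemma hv_inj: assumes "perm \<pi>" shows "inj_on (hv \<pi> a t) {0..<k*L}"
proof
  fix i j assume i: "i \<in> {0..<k*L}" and j: "j \<in> {0..<k*L}" and e: "hv \<pi> a t i = hv \<pi> a t j"
  have lt: "(i div L + gs a t (i mod L)) mod k < k" "(j div L + gs a t (j mod L)) mod k < k" using k0 by auto
  have e2: "(i div L + gs a t (i mod L)) mod k = (j div L + gs a t (j mod L)) mod k \<and>
    seq \<pi> (i mod L) = seq \<pi> (j mod L)" using e vtx_inj[OF lt] unfolding hv_def by blast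
  have "i mod L \<in> {..<L}" "j mod L \<in> {..<L}" using L0 by auto
  then have ij: "i mod L = j mod L" using seq_inj[OF assms] e2 by (meson inj_onD)
  then have "(i div L) mod k = (j div L) mod k" using e2 mod_cancel_add by metis
  moreover have "i div L < k" "j div L < k" using i j L0 by (auto simp: div_less_iff_less_mult)
  ultimately have "i div L = j div L" by simp
  moreover have "i = (i div L)*L + i mod L" "j = (j div L)*L + j mod L" by simp_all
  ultimately show "i = j" using ij by metis
qed

lemma hv_set: assumes "perm \<pi>" shows "hv \<pi> a t ` {0..<k*L} = {1..k*L}"
proof
  show "hv \<pi> a t ` {0..<k*L} \<subseteq> {1..k*L}" using hv_range assms by auto
  show "{1..k*L} \<subseteq> hv \<pi> a t ` {0..<k*L}"
  proof
    fix u assume "u \<in> {1..k*L}"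
    then obtain s l where sl: "s < k" "l < L" "u = vtx s l" using decode[of u] by auto
    obtain p where p: "p < L" "seq \<pi> p = l" using seq_surj assms sl by auto
    obtain i where "i < k*L" "i mod L = p" "(i div L + gs a t p) mod k = s" using hv_hit sl p by blast
    then have "hv \<pi> a t i = u" unfolding hv_def using sl p by auto
    then show "u \<in> hv \<pi> a t ` {0..<k*L}" using \<open>i < k*L\<close> by auto
  qed
qed

lemma seq_next_ne: assumes "perm \<pi>" "p < L" shows "seq \<pi> p \<noteq> seq \<pi> (Suc p mod L)"
proof
  assume e: "seq \<pi> p = seq \<pi> (Suc p mod L)"
  have "Suc p mod L < L" using L0 by auto
  then have "p = Suc p mod L" using seq_inj[OF assms(1)] e assms(2) by (meson inj_onD lessThan_iff)
  moreover have "p \<noteq> Suc p mod L"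
  proof (cases "Suc p < L")
    case True then show ?thesis by auto
  next
    case False then have "Suc p = L" using assms by auto
    then show ?thesis using mL m1 by auto
  qed
  ultimately show False by blast
qed

lemma Gr_sub: assumes "perm \<pi>" shows "Gr \<pi> a t \<subseteq> pairs (k*L)"
proof
  fix e assume "e \<in> Gr \<pi> a t"
  then obtain s p where sp: "s < k" "p < L"
    "e = {vtx s (seq \<pi> p), vtx ((s + off a t p) mod k) (seq \<pi> (Suc p mod L))}" unfolding Gr_def by auto
  have s1: "(s + off a t p) mod k < k" using k0 by auto
  have ne: "vtx s (seq \<pi> p) \<noteq> vtx ((s + off a t p) mod k) (seq \<pi> (Suc p mod L))"
    using vtx_inj[OF sp(1) s1] seq_next_ne[OF assms sp(2)] by auto
  have "Suc p mod L < L" using L0 by auto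
  then have "vtx s (seq \<pi> p) \<in> {1..k*L}" "vtx ((s + off a t p) mod k) (seq \<pi> (Suc p mod L)) \<in> {1..k*L}"
    using vtx_range seq_lt[OF assms] sp s1 by auto
  then show "e \<in> pairs (k*L)" unfolding pairs_def using sp(3) ne by auto
qed

lemma hv_edge: assumes "gs a t L mod k = 1" shows "{hv \<pi> a t i, hv \<pi> a t (Suc i)} \<in> Gr \<pi> a t"
proof -
  have "(i div L + gs a t (i mod L)) mod k < k" "i mod L < L" using k0 L0 by auto
  then show ?thesis unfolding Gr_def hv_step[OF assms] by (auto simp: hv_def)
qed

lemma hv_per: "hv \<pi> a t (k*L) = hv \<pi> a t 0"
  using L0 unfolding hv_def by (simp add: gs0)

lemma ham_edges: assumes "perm \<pi>" "gs a t L mod k = 1"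
  shows "cycle_edges (map (hv \<pi> a t) [0..<k*L]) = Gr \<pi> a t"
proof -
  have N: "0 < k*L" using k0 L0 by auto
  have nx: "\<And>i. i < k*L \<Longrightarrow> hv \<pi> a t ((i + 1) mod (k*L)) = hv \<pi> a t (Suc i)"
  proof -
    fix i assume i: "i < k*L"
    show "hv \<pi> a t ((i + 1) mod (k*L)) = hv \<pi> a t (Suc i)"
    proof (cases "i + 1 < k*L")
      case True then show ?thesis by auto
    next
      case False then have "Suc i = k*L" using i by auto
      then show ?thesis using hv_per by auto
    qed
  qed
  have ce: "\<And>vs. cycle_edges vs = (\<lambda>i. {vs!i, vs!((i+1) mod length vs)}) ` {..<length vs}"
    unfolding cycle_edges_def by auto
  have "cycle_edges (map (hv \<pi> a t) [0..<k*L]) = (\<lambda>i. {hv \<pi> a t i, hv \<pi> a t (Suc i)}) ` {..<k*L}"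
    unfolding ce using nx N by (intro image_cong) auto
  also have "\<dots> = {{hv \<pi> a t i, hv \<pi> a t (Suc i)} | i. i < k*L}" by auto
  finally have "cycle_edges (map (hv \<pi> a t) [0..<k*L]) = {{hv \<pi> a t i, hv \<pi> a t (Suc i)} | i. i < k*L}" .
  also have "\<dots> = Gr \<pi> a t"
  proof
    show "{{hv \<pi> a t i, hv \<pi> a t (Suc i)} | i. i < k*L} \<subseteq> Gr \<pi> a t" using hv_edge[OF assms(2)] by auto
    show "Gr \<pi> a t \<subseteq> {{hv \<pi> a t i, hv \<pi> a t (Suc i)} | i. i < k*L}"
    proof
      fix e assume "e \<in> Gr \<pi> a t"
      then obtain s p where sp: "s < k" "p < L"
        "e = {vtx s (seq \<pi> p), vtx ((s + off a t p) mod k) (seq \<pi> (Suc p mod L))}" unfolding Gr_def by auto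
      obtain i where i: "i < k*L" "i mod L = p" "(i div L + gs a t p) mod k = s" using hv_hit sp by blast
      have "e = {hv \<pi> a t i, hv \<pi> a t (Suc i)}" unfolding sp(3) hv_step[OF assms(2)]
        using i by (simp add: hv_def)
      then show "e \<in> {{hv \<pi> a t i, hv \<pi> a t (Suc i)} | i. i < k*L}" using i by auto
    qed
  qed
  finally show ?thesis .
qed

lemma gx_cube: "perm \<pi> \<Longrightarrow> (\<lambda>e. e \<in> Gr \<pi> a t) \<in> cube (pairs (k*L))"
  unfolding cube_def using Gr_sub by auto

lemma L3: "3 \<le> L" using mL m1 by auto

lemma ham_ok: assumes "perm \<pi>" "gs a t L mod k = 1"
  shows "ham_cycle (k*L) (\<lambda>e. e \<in> Gr \<pi> a t)"
proof -
  have "L \<le> k*L" using k0 by simp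
  then have "3 \<le> k*L" using L3 by linarith
  show ?thesis unfolding ham_cycle_def union_of_cycles_def
  proof (intro conjI exI[of _ "[map (hv \<pi> a t) [0..<k*L]]"])
    show "(\<lambda>e. e \<in> Gr \<pi> a t) \<in> cube (pairs (k*L))" using gx_cube assms by auto
    show "3 \<le> k*L" by fact
    show "distinct (concat [map (hv \<pi> a t) [0..<k*L]])" using hv_inj[OF assms(1)] by (simp add: distinct_map)
    show "set (concat [map (hv \<pi> a t) [0..<k*L]]) = {1..k*L}" using hv_set[OF assms(1)] by simp
    show "{e. e \<in> Gr \<pi> a t} = (\<Union>vs\<in>set [map (hv \<pi> a t) [0..<k*L]]. cycle_edges vs)"
      using ham_edges[OF assms] by simp
  qed auto
qed

lemma concat_grid: assumes "0 < (M::nat)"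
  shows "concat (map (\<lambda>c. map (f c) [0..<M]) [0..<K]) = map (\<lambda>i. f (i div M) (i mod M)) [0..<K*M]"
proof (induction K)
  case 0 then show ?case by simp
next
  case (Suc K)
  have u: "[0..<Suc K * M] = [0..<K*M] @ [K*M..<K*M + M]"
    by (metis add.commute mult_Suc upt_add_eq_append zero_le)
  have "map (\<lambda>i. f (i div M) (i mod M)) [K*M..<K*M + M] = map (\<lambda>i. f (i div M) (i mod M)) (map (\<lambda>i. i + K*M) [0..<M])"
    by (simp add: map_add_upt add.commute)
  also have "\<dots> = map (f K) [0..<M]" using assms by (auto simp: add.commute)
  finally show ?case using Suc u by simp
qed

lemma cv_hv: "cv \<pi> a t (i div L) (i mod L) = hv \<pi> a t i"
  unfolding cv_def hv_def by simp

lemma union_ok: assumes "perm \<pi>" "gs a t L mod k = 0"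
  shows "union_of_cycles (k*L) k L (\<lambda>e. e \<in> Gr \<pi> a t)"
proof -
  define vss where "vss = map (\<lambda>c. map (cv \<pi> a t c) [0..<L]) [0..<k]"
  have cc: "concat vss = map (hv \<pi> a t) [0..<k*L]"
    unfolding vss_def concat_grid[OF L0] using cv_hv by simp
  have ce: "\<And>vs. cycle_edges vs = (\<lambda>i. {vs!i, vs!((i+1) mod length vs)}) ` {..<length vs}"
    unfolding cycle_edges_def by auto
  have cyc: "\<And>c. c < k \<Longrightarrow> cycle_edges (map (cv \<pi> a t c) [0..<L]) = (\<lambda>p. {cv \<pi> a t c p, cv \<pi> a t c (Suc p mod L)}) ` {..<L}"
    unfolding ce using L0 by (intro image_cong) auto
  have E: "Gr \<pi> a t = (\<Union>vs\<in>set vss. cycle_edges vs)"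
  proof
    show "Gr \<pi> a t \<subseteq> (\<Union>vs\<in>set vss. cycle_edges vs)"
    proof
      fix e assume "e \<in> Gr \<pi> a t"
      then obtain s p where sp: "s < k" "p < L"
        "e = {vtx s (seq \<pi> p), vtx ((s + off a t p) mod k) (seq \<pi> (Suc p mod L))}" unfolding Gr_def by auto
      define c where "c = (s + (k - gs a t p mod k)) mod k"
      have c: "c < k" unfolding c_def using k0 by auto
      have "(c + gs a t p) mod k = s" unfolding c_def using hit sp by simp
      then have "e = {cv \<pi> a t c p, cv \<pi> a t c (Suc p mod L)}"
        unfolding sp(3) cv_step[OF assms(2) sp(2) c] by (simp add: cv_def)
      then have "e \<in> cycle_edges (map (cv \<pi> a t c) [0..<L])" unfolding cyc[OF c] using sp by auto
      moreover have "map (cv \<pi> a t c) [0..<L] \<in> set vss" unfolding vss_def using c by auto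
      ultimately show "e \<in> (\<Union>vs\<in>set vss. cycle_edges vs)" by blast
    qed
    show "(\<Union>vs\<in>set vss. cycle_edges vs) \<subseteq> Gr \<pi> a t"
    proof
      fix e assume "e \<in> (\<Union>vs\<in>set vss. cycle_edges vs)"
      then obtain c where c: "c < k" "e \<in> cycle_edges (map (cv \<pi> a t c) [0..<L])" unfolding vss_def by auto
      then obtain p where p: "p < L" "e = {cv \<pi> a t c p, cv \<pi> a t c (Suc p mod L)}" using cyc by auto
      have "(c + gs a t p) mod k < k" using k0 by auto
      then show "e \<in> Gr \<pi> a t" unfolding p(2) cv_step[OF assms(2) p(1) c(1)] Gr_def using p(1)
        by (auto simp: cv_def)
    qed
  qed
  show ?thesis unfolding union_of_cycles_def
  proof (intro conjI exI[of _ vss])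
    show "(\<lambda>e. e \<in> Gr \<pi> a t) \<in> cube (pairs (k*L))" using gx_cube assms by auto
    show "3 \<le> L" using L3 .
    show "length vss = k" unfolding vss_def by simp
    show "\<forall>vs\<in>set vss. length vs = L" unfolding vss_def by auto
    show "distinct (concat vss)" unfolding cc using hv_inj[OF assms(1)] by (simp add: distinct_map)
    show "set (concat vss) = {1..k*L}" unfolding cc using hv_set[OF assms(1)] by simp
    show "{e. e \<in> Gr \<pi> a t} = (\<Union>vs\<in>set vss. cycle_edges vs)" using E by blast
  qed
qed

end

lemma cycle_edges_sub: "e \<in> cycle_edges vs \<Longrightarrow> e \<subseteq> set vs"
proof -
  assume "e \<in> cycle_edges vs"
  then obtain i where i: "i < length vs" "e = {vs ! i, vs ! ((i + 1) mod length vs)}"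
    unfolding cycle_edges_def by auto
  have "0 < length vs" using i(1) by auto
  then have "(i + 1) mod length vs < length vs" by (rule mod_less_divisor)
  then show ?thesis using i by auto
qed

lemma union_not_ham: assumes "2 \<le> k" "union_of_cycles n k L x" shows "\<not> union_of_cycles n 1 n x"
proof
  assume h: "union_of_cycles n 1 n x"
  obtain vss where U: "length vss = k" "\<forall>vs\<in>set vss. length vs = L" "distinct (concat vss)"
    "set (concat vss) = {1..n}" "{e. x e} = (\<Union>vs\<in>set vss. cycle_edges vs)" "3 \<le> L"
    using assms(2) unfolding union_of_cycles_def by blast
  obtain hs where H: "length hs = 1" "\<forall>vs\<in>set hs. length vs = n" "distinct (concat hs)"
    "set (concat hs) = {1..n}" "{e. x e} = (\<Union>vs\<in>set hs. cycle_edges vs)" "3 \<le> n"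
    using h unfolding union_of_cycles_def by blast
  obtain vs where vs: "hs = [vs]" using H(1) by (cases hs) auto
  have lv: "length vs = n" "set vs = {1..n}" "{e. x e} = cycle_edges vs" using H vs by auto
  have disj: "\<And>A B. A \<in> set vss \<Longrightarrow> B \<in> set vss \<Longrightarrow> set A \<inter> set B \<noteq> {} \<Longrightarrow> A = B"
    using U(3) unfolding distinct_concat_iff by blast
  have "0 < n" using H(6) by auto
  then have "vs ! 0 \<in> set vs" using lv(1) by auto
  then have "vs ! 0 \<in> {1..n}" using lv(2) by auto
  then have "vs ! 0 \<in> set (concat vss)" using U(4) by simp
  then obtain W where W: "W \<in> set vss" "vs ! 0 \<in> set W" by auto
  have all: "\<forall>i<n. vs ! i \<in> set W"
  proof (intro allI impI)
    fix i assume "i < n"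
    then show "vs ! i \<in> set W"
    proof (induction i)
      case 0 then show ?case using W by simp
    next
      case (Suc i)
      have "(i+1) mod n = Suc i" using Suc by auto
      then have e: "{vs ! i, vs ! Suc i} \<in> cycle_edges vs" unfolding cycle_edges_def using lv Suc
        by (metis (mono_tags, lifting) Suc_lessD mem_Collect_eq)
      then have "{vs ! i, vs ! Suc i} \<in> {e. x e}" using lv by auto
      then obtain W' where W': "W' \<in> set vss" "{vs ! i, vs ! Suc i} \<in> cycle_edges W'" using U(5) by auto
      then have "{vs ! i, vs ! Suc i} \<subseteq> set W'" using cycle_edges_sub by blast
      then have i1: "vs ! i \<in> set W'" "vs ! Suc i \<in> set W'" by auto
      moreover have "vs ! i \<in> set W" using Suc by auto
      ultimately have "set W' \<inter> set W \<noteq> {}" by auto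
      then have "W' = W" using disj W(1) W'(1) by blast
      then show ?case using i1 by simp
    qed
  qed
  have "set vs \<subseteq> set W"
  proof
    fix v assume "v \<in> set vs"
    then obtain i where "i < length vs" "v = vs ! i" by (auto simp: in_set_conv_nth)
    then show "v \<in> set W" using all lv by auto
  qed
  then have "card (set vs) \<le> card (set W)" by (intro card_mono) auto
  moreover have "card (set vs) = n" using lv by simp
  moreover have "card (set W) \<le> L" using U(2) W(1) card_length[of W] by auto
  ultimately have nL: "n \<le> L" by linarith
  have "sum_list (map length vss) = sum_list (map (\<lambda>_. L) vss)" using U(2) by (intro arg_cong[of _ _ sum_list] map_cong) auto
  then have "length (concat vss) = k * L" using U(1) by (simp add: length_concat sum_list_triv)
  moreover have "card (set (concat vss)) = length (concat vss)" by (rule distinct_card[OF U(3)])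
  ultimately have "n = k * L" using U(4) by simp
  moreover have "2 * L \<le> k * L" using assms(1) by (intro mult_le_mono1)
  ultimately show False using nL U(6) by linarith
qed


lemma match_step:
  assumes fin: "finite R" "finite C" and cR: "card R = M" and cC: "card C = M"
    and dr: "\<forall>r\<in>R. card {c\<in>C. (r,c)\<in>F} \<le> d" and dc: "\<forall>c\<in>C. card {r\<in>R. (r,c)\<in>F} \<le> d"
    and dM: "2*d \<le> M"
    and R0: "R0 \<subseteq> R" "card R0 = K" "K < M" "inj_on \<mu> R0" "\<mu> ` R0 \<subseteq> C" "\<forall>r\<in>R0. (r, \<mu> r) \<notin> F"
  shows "\<exists>R1 \<mu>1. R1 \<subseteq> R \<and> card R1 = Suc K \<and> inj_on \<mu>1 R1 \<and> \<mu>1 ` R1 \<subseteq> C \<and> (\<forall>r\<in>R1. (r, \<mu>1 r) \<notin> F)"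
proof -
  have finR0: "finite R0" using R0(1) fin finite_subset by auto
  have "R0 \<noteq> R" using R0(2,3) cR by auto
  then obtain r where r: "r \<in> R" "r \<notin> R0" using R0(1) by auto
  have cimg: "card (\<mu> ` R0) = K" using card_image[OF R0(4)] R0(2) by simp
  then have "\<mu> ` R0 \<noteq> C" using cC R0(3) by auto
  then obtain c where c: "c \<in> C" "c \<notin> \<mu> ` R0" using R0(5) by auto
  define A where "A = {c'\<in>C. (r,c')\<notin>F}"
  define B where "B = {r'\<in>R. (r',c)\<notin>F}"
  have cA: "M - d \<le> card A"
  proof -
    have "A = C - {c'\<in>C. (r,c')\<in>F}" unfolding A_def by auto
    then have "card A = card C - card {c'\<in>C. (r,c')\<in>F}" using fin by (simp add: card_Diff_subset)
    then show ?thesis using dr r cC by auto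
  qed
  have cB: "M - d \<le> card B"
  proof -
    have "B = R - {r'\<in>R. (r',c)\<in>F}" unfolding B_def by auto
    then have "card B = card R - card {r'\<in>R. (r',c)\<in>F}" using fin by (simp add: card_Diff_subset)
    then show ?thesis using dc c cR by auto
  qed
  show ?thesis
  proof (cases "\<exists>c'\<in>A. c' \<notin> \<mu> ` R0")
    case True
    then obtain c' where c': "c' \<in> A" "c' \<notin> \<mu> ` R0" by auto
    show ?thesis
    proof (intro exI[of _ "insert r R0"] exI[of _ "\<mu>(r := c')"] conjI)
      show "insert r R0 \<subseteq> R" using r R0 by auto
      show "card (insert r R0) = Suc K" using r R0 finR0 by auto
      show "inj_on (\<mu>(r := c')) (insert r R0)"
      proof -
        have "inj_on (\<mu>(r := c')) R0" using R0(4) r by (subst inj_on_cong[of R0 _ \<mu>]) auto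
        moreover have "(\<mu>(r := c')) ` R0 = \<mu> ` R0" using r by auto
        ultimately show ?thesis using c' r by (simp add: inj_on_insert)
      qed
      show "(\<mu>(r := c')) ` insert r R0 \<subseteq> C" using R0(5) r c' unfolding A_def by auto
      show "\<forall>ra\<in>insert r R0. (ra, (\<mu>(r := c')) ra) \<notin> F" using R0(6) r c' unfolding A_def by auto
    qed
  next
    case F1: False
    show ?thesis
    proof (cases "\<exists>r'\<in>B. r' \<notin> R0")
      case True
      then obtain r' where r': "r' \<in> B" "r' \<notin> R0" by auto
      show ?thesis
      proof (intro exI[of _ "insert r' R0"] exI[of _ "\<mu>(r' := c)"] conjI)
        show "insert r' R0 \<subseteq> R" using r' R0 unfolding B_def by auto
        show "card (insert r' R0) = Suc K" using r' R0 finR0 by auto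
        show "inj_on (\<mu>(r' := c)) (insert r' R0)"
        proof -
          have "inj_on (\<mu>(r' := c)) R0" using R0(4) r' by (subst inj_on_cong[of R0 _ \<mu>]) auto
          moreover have "(\<mu>(r' := c)) ` R0 = \<mu> ` R0" using r' by auto
          ultimately show ?thesis using c r' by (simp add: inj_on_insert)
        qed
        show "(\<mu>(r' := c)) ` insert r' R0 \<subseteq> C" using R0(5) r' c by auto
        show "\<forall>ra\<in>insert r' R0. (ra, (\<mu>(r' := c)) ra) \<notin> F" using R0(6) r' c unfolding B_def by auto
      qed
    next
      case F2: False
      have AR: "A \<subseteq> \<mu> ` R0" using F1 by auto
      have BR: "B \<subseteq> R0" using F2 by auto
      define S where "S = {r0\<in>R0. \<mu> r0 \<in> A}"
      have "\<mu> ` S = A" unfolding S_def using AR by auto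
      moreover have "inj_on \<mu> S" using R0(4) unfolding S_def by (auto simp: inj_on_def)
      ultimately have cS: "card S = card A" using card_image by metis
      have SR: "S \<subseteq> R0" unfolding S_def by auto
      have "S \<inter> B \<noteq> {}"
      proof
        assume "S \<inter> B = {}"
        then have "card (S \<union> B) = card S + card B"
          using SR BR finR0 by (intro card_Un_disjoint) (auto intro: finite_subset)
        moreover have "card (S \<union> B) \<le> card R0" using SR BR finR0 by (intro card_mono) auto
        ultimately show False using cS cA cB R0(2,3) dM by linarith
      qed
      then obtain r0 where r0: "r0 \<in> S" "r0 \<in> B" by auto
      then have r0': "r0 \<in> R0" "\<mu> r0 \<in> A" "(r0, c) \<notin> F" unfolding S_def B_def by auto
      have rr0: "r \<noteq> r0" using r r0' by auto
      show ?thesis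
      proof (intro exI[of _ "insert r R0"] exI[of _ "\<mu>(r0 := c, r := \<mu> r0)"] conjI)
        show "insert r R0 \<subseteq> R" using r R0 by auto
        show "card (insert r R0) = Suc K" using r R0 finR0 by auto
        show "inj_on (\<mu>(r0 := c, r := \<mu> r0)) (insert r R0)"
        proof (rule inj_onI)
          fix x y assume x: "x \<in> insert r R0" and y: "y \<in> insert r R0"
            and e: "(\<mu>(r0 := c, r := \<mu> r0)) x = (\<mu>(r0 := c, r := \<mu> r0)) y"
          have nc: "\<And>z. z \<in> R0 \<Longrightarrow> \<mu> z \<noteq> c" using c by auto
          have ij: "\<And>z. z \<in> R0 \<Longrightarrow> \<mu> z = \<mu> r0 \<Longrightarrow> z = r0" using R0(4) r0' by (auto dest: inj_onD)
          show "x = y" using x y e rr0 nc ij r0' r R0(4) by (auto split: if_splits dest: inj_onD)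
        qed
        show "(\<mu>(r0 := c, r := \<mu> r0)) ` insert r R0 \<subseteq> C" using R0(5) r0' c by auto
        show "\<forall>ra\<in>insert r R0. (ra, (\<mu>(r0 := c, r := \<mu> r0)) ra) \<notin> F"
          using R0(6) r0' rr0 unfolding A_def by auto
      qed
    qed
  qed
qed

lemma matching:
  assumes fin: "finite R" "finite C" and cR: "card R = M" and cC: "card C = M"
    and dr: "\<forall>r\<in>R. card {c\<in>C. (r,c)\<in>F} \<le> d" and dc: "\<forall>c\<in>C. card {r\<in>R. (r,c)\<in>F} \<le> d"
    and dM: "2*d \<le> M"
  shows "\<exists>\<mu>. bij_betw \<mu> R C \<and> (\<forall>r\<in>R. (r, \<mu> r) \<notin> F)"
proof -
  have "\<forall>K\<le>M. \<exists>R0 \<mu>. R0 \<subseteq> R \<and> card R0 = K \<and> inj_on \<mu> R0 \<and> \<mu> ` R0 \<subseteq> C \<and> (\<forall>r\<in>R0. (r, \<mu> r) \<notin> F)"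
  proof (intro allI impI)
    fix K assume "K \<le> M"
    then show "\<exists>R0 \<mu>. R0 \<subseteq> R \<and> card R0 = K \<and> inj_on \<mu> R0 \<and> \<mu> ` R0 \<subseteq> C \<and> (\<forall>r\<in>R0. (r, \<mu> r) \<notin> F)"
    proof (induction K)
      case 0 then show ?case by (intro exI[of _ "{}"]) auto
    next
      case (Suc K)
      have "K \<le> M" "K < M" using Suc.prems by auto
      then obtain R0 \<mu> where H: "R0 \<subseteq> R" "card R0 = K" "inj_on \<mu> R0" "\<mu> ` R0 \<subseteq> C" "\<forall>r\<in>R0. (r, \<mu> r) \<notin> F"
        using Suc.IH by blast
      show ?case by (rule match_step[OF fin cR cC dr dc dM H(1,2) \<open>K < M\<close> H(3,4,5)])
    qed
  qed
  from this[rule_format, OF order_refl] obtain R0 \<mu> where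
    R0: "R0 \<subseteq> R" "card R0 = M" "inj_on \<mu> R0" "\<mu> ` R0 \<subseteq> C" "\<forall>r\<in>R0. (r, \<mu> r) \<notin> F"
    by blast
  have "R0 = R" using card_subset_eq[OF fin(1) R0(1)] R0(2) cR by simp
  moreover have "\<mu> ` R0 = C" using card_subset_eq[OF fin(2) R0(4)] card_image[OF R0(3)] R0(2) cC by simp
  ultimately show ?thesis using R0 unfolding bij_betw_def by auto
qed


definition rc :: "(nat \<times> nat) set \<Rightarrow> nat \<Rightarrow> nat" where "rc F a = card {j. (a,j) \<in> F}"
definition cc :: "(nat \<times> nat) set \<Rightarrow> nat \<Rightarrow> nat" where "cc F j = card {a. (a,j) \<in> F}"
definition pinj :: "(nat \<times> nat) set \<Rightarrow> bool" where
  "pinj P = (\<forall>x\<in>P. \<forall>y\<in>P. (fst x = fst y \<longleftrightarrow> snd x = snd y))"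

lemma rc_fin: "finite F \<Longrightarrow> finite {j. (a,j) \<in> F}"
proof -
  assume "finite F"
  then have "finite (snd ` F)" by auto
  moreover have "{j. (a,j) \<in> F} \<subseteq> snd ` F" by force
  ultimately show ?thesis by (rule finite_subset[rotated])
qed

lemma cc_fin: "finite F \<Longrightarrow> finite {a. (a,j) \<in> F}"
proof -
  assume "finite F"
  then have "finite (fst ` F)" by auto
  moreover have "{a. (a,j) \<in> F} \<subseteq> fst ` F" by force
  ultimately show ?thesis by (rule finite_subset[rotated])
qed

lemma rc_insert_other: "a' \<noteq> a \<Longrightarrow> rc (insert (a',j') F) a = rc F a"
  unfolding rc_def by (rule arg_cong[of _ _ card]) auto
lemma cc_insert_other: "j' \<noteq> j \<Longrightarrow> cc (insert (a',j') F) j = cc F j"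
  unfolding cc_def by (rule arg_cong[of _ _ card]) auto
lemma rc_insert_same: "finite F \<Longrightarrow> (a,j) \<notin> F \<Longrightarrow> rc (insert (a,j) F) a = Suc (rc F a)"
proof -
  assume f: "finite F" "(a,j) \<notin> F"
  have "{j'. (a,j') \<in> insert (a,j) F} = insert j {j'. (a,j') \<in> F}" by auto
  then show ?thesis unfolding rc_def using rc_fin[OF f(1)] f(2) by simp
qed
lemma cc_insert_same: "finite F \<Longrightarrow> (a,j) \<notin> F \<Longrightarrow> cc (insert (a,j) F) j = Suc (cc F j)"
proof -
  assume f: "finite F" "(a,j) \<notin> F"
  have "{a'. (a',j) \<in> insert (a,j) F} = insert a {a'. (a',j) \<in> F}" by auto
  then show ?thesis unfolding cc_def using cc_fin[OF f(1)] f(2) by simp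
qed
lemma rc_mono: "finite F' \<Longrightarrow> F \<subseteq> F' \<Longrightarrow> rc F a \<le> rc F' a"
  unfolding rc_def using rc_fin by (intro card_mono) auto
lemma cc_mono: "finite F' \<Longrightarrow> F \<subseteq> F' \<Longrightarrow> cc F a \<le> cc F' a"
  unfolding cc_def using cc_fin by (intro card_mono) auto

context lay begin

definition box :: "(nat \<times> nat) set" where "box = {..<m} \<times> {..<m}"

definition cons :: "(nat \<times> nat) set \<Rightarrow> (nat \<times> nat) set \<Rightarrow> (nat \<times> nat) set \<Rightarrow> (nat \<Rightarrow> nat) \<Rightarrow> nat \<Rightarrow> bool" where
  "cons F P Q \<pi> x = (perm \<pi> \<and> (\<forall>a<m. (a, \<pi> a) \<notin> F) \<and> (\<forall>y\<in>P. \<pi> (fst y) = snd y) \<and> x < m \<and>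
     x \<notin> fst ` P \<and> (x, \<pi> x) \<notin> Q)"

definition invFP :: "nat \<Rightarrow> (nat \<times> nat) set \<Rightarrow> (nat \<times> nat) set \<Rightarrow> nat \<Rightarrow> bool" where
  "invFP dl F P q = (F \<subseteq> box \<and> P \<subseteq> box \<and> pinj P \<and> P \<inter> F = {} \<and>
     (\<forall>a<m. a \<notin> fst ` P \<longrightarrow> rc F a \<le> dl) \<and> (\<forall>j<m. j \<notin> snd ` P \<longrightarrow> cc F j \<le> dl) \<and>
     (\<forall>y\<in>P. dl \<le> rc F (fst y) \<or> dl \<le> cc F (snd y)) \<and> card F \<le> q \<and> card P \<le> q)"

definition inv :: "nat \<Rightarrow> (nat \<times> nat) set \<Rightarrow> (nat \<times> nat) set \<Rightarrow> (nat \<times> nat) set \<Rightarrow> nat \<Rightarrow> bool" where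
  "inv dl F P Q q = (invFP dl F P q \<and> Q \<subseteq> box \<and> card Q \<le> q)"

lemma finite_box: "finite box" unfolding box_def by auto

lemma cell_step: assumes I: "invFP dl F P q" and aj: "a < m" "j < m"
  shows "\<exists>F' P' b. invFP dl F' P' (Suc q) \<and> (\<forall>\<pi> x. cons F' P' Q \<pi> x \<longrightarrow> cons F P Q \<pi> x) \<and>
     (\<forall>\<pi> x. cons F' P' Q \<pi> x \<longrightarrow> (\<pi> a = j) = b)"
proof -
  note I' = I[unfolded invFP_def]
  have finF: "finite F" using I' finite_box finite_subset by blast
  have finP: "finite P" using I' finite_box finite_subset by blast
  have mono: "invFP dl F P (Suc q)" using I unfolding invFP_def by auto
  show ?thesis
  proof (cases "(a,j) \<in> P")
    case True
    show ?thesis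
      by (rule exI[of _ F], rule exI[of _ P], rule exI[of _ True]) (use mono True in \<open>auto simp: cons_def\<close>)
  next
    case nP: False
    show ?thesis
    proof (cases "a \<in> fst ` P \<or> j \<in> snd ` P")
      case True
      have "\<forall>\<pi> x. cons F P Q \<pi> x \<longrightarrow> (\<pi> a = j) = False"
      proof (intro allI impI)
        fix \<pi> x assume c: "cons F P Q \<pi> x"
        show "(\<pi> a = j) = False"
        proof (cases "a \<in> fst ` P")
          case True
          then obtain j' where "(a,j') \<in> P" by force
          then have "\<pi> a = j'" "j' \<noteq> j" using c nP unfolding cons_def by force+
          then show ?thesis by auto
        next
          case False
          then have "j \<in> snd ` P" using \<open>a \<in> fst ` P \<or> j \<in> snd ` P\<close> by auto
          then obtain a' where a': "(a',j) \<in> P" by force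
          then have "\<pi> a' = j" "a' \<noteq> a" using c nP False unfolding cons_def by force+
          moreover have "a' < m" using a' I' unfolding box_def by auto
          moreover have "inj_on \<pi> {..<m}" using c unfolding cons_def perm_def bij_betw_def by auto
          ultimately show ?thesis using aj by (auto dest: inj_onD)
        qed
      qed
      then show ?thesis using mono by (intro exI[of _ F] exI[of _ P] exI[of _ False] conjI) auto
    next
      case nD: False
      show ?thesis
      proof (cases "(a,j) \<in> F")
        case True
        have "\<forall>\<pi> x. cons F P Q \<pi> x \<longrightarrow> (\<pi> a = j) = False" using True aj unfolding cons_def by auto
        then show ?thesis using mono by (intro exI[of _ F] exI[of _ P] exI[of _ False] conjI) auto
      next
        case nF: False
        show ?thesis
        proof (cases "rc F a < dl \<and> cc F j < dl")
          case True
          define F' where "F' = insert (a,j) F"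
          have "invFP dl F' P (Suc q)"
            unfolding invFP_def
          proof (intro conjI)
            show "F' \<subseteq> box" using I' aj unfolding F'_def box_def by auto
            show "P \<subseteq> box" "pinj P" using I' by auto
            show "P \<inter> F' = {}" using I' nP unfolding F'_def by auto
            show "\<forall>a'<m. a' \<notin> fst ` P \<longrightarrow> rc F' a' \<le> dl"
            proof (intro allI impI)
              fix a' assume "a' < m" "a' \<notin> fst ` P"
              then show "rc F' a' \<le> dl" unfolding F'_def using I' True
                by (cases "a' = a") (auto simp: rc_insert_same[OF finF nF] rc_insert_other)
            qed
            show "\<forall>j'<m. j' \<notin> snd ` P \<longrightarrow> cc F' j' \<le> dl"
            proof (intro allI impI)
              fix j' assume "j' < m" "j' \<notin> snd ` P"
              then show "cc F' j' \<le> dl" unfolding F'_def using I' True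
                by (cases "j' = j") (auto simp: cc_insert_same[OF finF nF] cc_insert_other)
            qed
            have "\<And>y. rc F y \<le> rc F' y" "\<And>y. cc F y \<le> cc F' y" unfolding F'_def using finF
              by (auto intro!: rc_mono cc_mono)
            then show "\<forall>y\<in>P. dl \<le> rc F' (fst y) \<or> dl \<le> cc F' (snd y)" using I' by (meson le_trans)
            show "card F' \<le> Suc q" unfolding F'_def using I' finF by (simp add: card_insert_if)
            show "card P \<le> Suc q" using I' by auto
          qed
          moreover have "\<forall>\<pi> x. cons F' P Q \<pi> x \<longrightarrow> cons F P Q \<pi> x" unfolding cons_def F'_def by auto
          moreover have "\<forall>\<pi> x. cons F' P Q \<pi> x \<longrightarrow> (\<pi> a = j) = False" unfolding cons_def F'_def using aj by auto
          ultimately show ?thesis by (intro exI[of _ F'] exI[of _ P] exI[of _ False] conjI) auto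
        next
          case False
          define P' where "P' = insert (a,j) P"
          have "invFP dl F P' (Suc q)"
            unfolding invFP_def
          proof (intro conjI)
            show "F \<subseteq> box" using I' by auto
            show "P' \<subseteq> box" using I' aj unfolding P'_def box_def by auto
            show "pinj P'"
            proof -
              have pP: "pinj P" using I' by auto
              show ?thesis unfolding pinj_def P'_def
              proof (intro ballI)
                fix x y assume x: "x \<in> insert (a,j) P" and y: "y \<in> insert (a,j) P"
                have n1: "\<forall>z\<in>P. fst z \<noteq> a" using nD by force
                have n2: "\<forall>z\<in>P. snd z \<noteq> j" using nD by force
                show "(fst x = fst y) = (snd x = snd y)"
                proof (cases "x = (a,j)")
                  case True
                  then show ?thesis using y n1 n2 by auto
                next
                  case False
                  then have "x \<in> P" using x by auto
                  then show ?thesis using y n1 n2 pP unfolding pinj_def by auto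
                qed
              qed
            qed
            show "P' \<inter> F = {}" using I' nF unfolding P'_def by auto
            show "\<forall>a'<m. a' \<notin> fst ` P' \<longrightarrow> rc F a' \<le> dl" using I' unfolding P'_def by auto
            show "\<forall>j'<m. j' \<notin> snd ` P' \<longrightarrow> cc F j' \<le> dl" using I' unfolding P'_def by auto
            show "\<forall>y\<in>P'. dl \<le> rc F (fst y) \<or> dl \<le> cc F (snd y)" using I' False unfolding P'_def by auto
            show "card F \<le> Suc q" using I' by auto
            show "card P' \<le> Suc q" unfolding P'_def using I' finP by (simp add: card_insert_if)
          qed
          moreover have "\<forall>\<pi> x. cons F P' Q \<pi> x \<longrightarrow> cons F P Q \<pi> x" unfolding cons_def P'_def by auto
          moreover have "\<forall>\<pi> x. cons F P' Q \<pi> x \<longrightarrow> (\<pi> a = j) = True" unfolding cons_def P'_def by auto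
          ultimately show ?thesis by (intro exI[of _ F] exI[of _ P'] exI[of _ True] conjI) auto
        qed
      qed
    qed
  qed
qed

lemma query_step: assumes I: "inv dl F P Q q" and e: "e \<in> pairs (k*L)"
  shows "\<exists>F' P' Q' b. inv dl F' P' Q' (Suc q) \<and> (\<forall>\<pi> x. cons F' P' Q' \<pi> x \<longrightarrow> cons F P Q \<pi> x) \<and>
     (\<forall>\<pi> x t. cons F' P' Q' \<pi> x \<longrightarrow> (e \<in> Gr \<pi> x t) = b)"
proof -
  obtain a0 j0 where aj: "a0 < m" "j0 < m" and
    H: "(\<exists>b. \<forall>\<pi> a' t. perm \<pi> \<longrightarrow> a' < m \<longrightarrow> \<not>(a' = a0 \<and> \<pi> a0 = j0) \<longrightarrow> (e \<in> Gr \<pi> a' t) = b)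
     \<or> (\<exists>c<m. \<exists>d<m. \<forall>\<pi> a' t. perm \<pi> \<longrightarrow> a' < m \<longrightarrow> \<not>(a' = a0 \<and> \<pi> a0 = j0) \<longrightarrow> (e \<in> Gr \<pi> a' t) = (\<pi> c = d))"
    using pair_form[OF e] unfolding PF_def by blast
  define Q' where "Q' = insert (a0,j0) Q"
  have IQ: "Q' \<subseteq> box" "card Q' \<le> Suc q"
  proof -
    show "Q' \<subseteq> box" using I aj unfolding inv_def Q'_def box_def by auto
    have "finite Q" using I finite_box finite_subset unfolding inv_def by blast
    then show "card Q' \<le> Suc q" using I unfolding inv_def Q'_def by (simp add: card_insert_if)
  qed
  have nf: "\<And>F' P' \<pi> x. cons F' P' Q' \<pi> x \<Longrightarrow> \<not>(x = a0 \<and> \<pi> a0 = j0)"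
    unfolding cons_def Q'_def by auto
  have cQ: "\<And>F' P' \<pi> x. cons F' P' Q' \<pi> x \<Longrightarrow> cons F' P' Q \<pi> x"
    unfolding cons_def Q'_def by auto
  have base: "\<And>F' P' \<pi> x. cons F' P' Q' \<pi> x \<Longrightarrow> perm \<pi> \<and> x < m"
    unfolding cons_def by auto
  from H show ?thesis
  proof
    assume "\<exists>b. \<forall>\<pi> a' t. perm \<pi> \<longrightarrow> a' < m \<longrightarrow> \<not>(a' = a0 \<and> \<pi> a0 = j0) \<longrightarrow> (e \<in> Gr \<pi> a' t) = b"
    then obtain b where b: "\<forall>\<pi> a' t. perm \<pi> \<longrightarrow> a' < m \<longrightarrow> \<not>(a' = a0 \<and> \<pi> a0 = j0) \<longrightarrow> (e \<in> Gr \<pi> a' t) = b"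
      by blast
    have "inv dl F P Q' (Suc q)" using I IQ unfolding inv_def invFP_def by auto
    moreover have "\<forall>\<pi> x. cons F P Q' \<pi> x \<longrightarrow> cons F P Q \<pi> x" using cQ by blast
    moreover have "\<forall>\<pi> x t. cons F P Q' \<pi> x \<longrightarrow> (e \<in> Gr \<pi> x t) = b" using b nf base by blast
    ultimately show ?thesis by (intro exI[of _ F] exI[of _ P] exI[of _ Q'] exI[of _ b] conjI) auto
  next
    assume "\<exists>c<m. \<exists>d<m. \<forall>\<pi> a' t. perm \<pi> \<longrightarrow> a' < m \<longrightarrow> \<not>(a' = a0 \<and> \<pi> a0 = j0) \<longrightarrow> (e \<in> Gr \<pi> a' t) = (\<pi> c = d)"
    then obtain c d where cd: "c < m" "d < m" and
      b: "\<forall>\<pi> a' t. perm \<pi> \<longrightarrow> a' < m \<longrightarrow> \<not>(a' = a0 \<and> \<pi> a0 = j0) \<longrightarrow> (e \<in> Gr \<pi> a' t) = (\<pi> c = d)"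
      by blast
    have IFP: "invFP dl F P q" using I unfolding inv_def by auto
    obtain F' P' b' where S: "invFP dl F' P' (Suc q)" "\<forall>\<pi> x. cons F' P' Q \<pi> x \<longrightarrow> cons F P Q \<pi> x"
      "\<forall>\<pi> x. cons F' P' Q \<pi> x \<longrightarrow> (\<pi> c = d) = b'"
      using cell_step[OF IFP cd, of Q] by blast
    have "inv dl F' P' Q' (Suc q)" using S(1) IQ unfolding inv_def by auto
    moreover have "\<forall>\<pi> x. cons F' P' Q' \<pi> x \<longrightarrow> cons F P Q \<pi> x" using cQ S(2) by blast
    moreover have "\<forall>\<pi> x t. cons F' P' Q' \<pi> x \<longrightarrow> (e \<in> Gr \<pi> x t) = b'"
    proof (intro allI impI)
      fix \<pi> x t assume c: "cons F' P' Q' \<pi> x"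
      have "(e \<in> Gr \<pi> x t) = (\<pi> c = d)" using b nf[OF c] base[OF c] by blast
      also have "\<dots> = b'" using S(3) cQ[OF c] by blast
      finally show "(e \<in> Gr \<pi> x t) = b'" .
    qed
    ultimately show ?thesis by (intro exI[of _ F'] exI[of _ P'] exI[of _ Q'] exI[of _ b'] conjI) auto
  qed
qed

lemma heavy_rows: assumes "finite F" shows "dl * card {a\<in>{..<m}. dl \<le> rc F a} \<le> card F"
proof -
  define H where "H = {a\<in>{..<m}. dl \<le> rc F a}"
  have fH: "finite H" unfolding H_def by auto
  have "card H * dl \<le> (\<Sum>a\<in>H. rc F a)" using sum_bounded_below[of H dl "rc F"] unfolding H_def by auto
  also have "\<dots> = card (SIGMA a:H. {j. (a,j) \<in> F})" unfolding rc_def using fH rc_fin[OF assms] by simp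
  also have "\<dots> \<le> card F" using assms by (intro card_mono) auto
  finally show ?thesis unfolding H_def by (simp add: mult.commute)
qed

lemma heavy_cols: assumes "finite F" shows "dl * card {j\<in>{..<m}. dl \<le> cc F j} \<le> card F"
proof -
  define H where "H = {j\<in>{..<m}. dl \<le> cc F j}"
  have fH: "finite H" unfolding H_def by auto
  have "card H * dl \<le> (\<Sum>j\<in>H. cc F j)" using sum_bounded_below[of H dl "cc F"] unfolding H_def by auto
  also have "\<dots> = card (SIGMA j:H. {a. (a,j) \<in> F})" unfolding cc_def using fH cc_fin[OF assms] by simp
  also have "\<dots> = card ((\<lambda>(j,a). (a,j)) ` (SIGMA j:H. {a. (a,j) \<in> F}))"
    by (rule card_image[symmetric]) (auto simp: inj_on_def)
  also have "\<dots> \<le> card F" using assms by (intro card_mono) auto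
  finally show ?thesis unfolding H_def by (simp add: mult.commute)
qed

lemma commits: assumes I: "invFP dl F P q" shows "dl * card P \<le> 2 * card F"
proof -
  note I' = I[unfolded invFP_def]
  have finF: "finite F" using I' finite_box finite_subset by blast
  have finP: "finite P" using I' finite_box finite_subset by blast
  define Hr where "Hr = {a\<in>{..<m}. dl \<le> rc F a}"
  define Hc where "Hc = {j\<in>{..<m}. dl \<le> cc F j}"
  define P1 where "P1 = {y\<in>P. fst y \<in> Hr}"
  define P2 where "P2 = {y\<in>P. snd y \<in> Hc}"
  have pP: "pinj P" using I' by auto
  have "P \<subseteq> P1 \<union> P2"
  proof
    fix y assume y: "y \<in> P"
    then have "fst y < m" "snd y < m" using I' unfolding box_def by auto
    then show "y \<in> P1 \<union> P2" using y I' unfolding P1_def P2_def Hr_def Hc_def by auto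
  qed
  then have "card P \<le> card (P1 \<union> P2)" using finP unfolding P1_def P2_def by (intro card_mono) auto
  also have "\<dots> \<le> card P1 + card P2" by (rule card_Un_le)
  also have "card P1 \<le> card Hr"
  proof (rule card_inj_on_le[of fst])
    show "inj_on fst P1" using pP unfolding pinj_def P1_def inj_on_def by (auto simp: prod_eq_iff)
    show "fst ` P1 \<subseteq> Hr" unfolding P1_def by auto
    show "finite Hr" unfolding Hr_def by auto
  qed
  also have "card P2 \<le> card Hc"
  proof (rule card_inj_on_le[of snd])
    show "inj_on snd P2" using pP unfolding pinj_def P2_def inj_on_def by (auto simp: prod_eq_iff)
    show "snd ` P2 \<subseteq> Hc" unfolding P2_def by auto
    show "finite Hc" unfolding Hc_def by auto
  qed
  finally have "card P \<le> card Hr + card Hc" by simp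
  then have "dl * card P \<le> dl * card Hr + dl * card Hc" by (metis add_mult_distrib2 mult_le_mono2)
  also have "\<dots> \<le> card F + card F" using heavy_rows[OF finF, of dl] heavy_cols[OF finF, of dl]
    unfolding Hr_def Hc_def by (rule add_mono)
  finally show ?thesis by simp
qed

lemma pinj_the: "pinj P \<Longrightarrow> (a,j) \<in> P \<Longrightarrow> (THE j. (a,j) \<in> P) = j"
  unfolding pinj_def by (rule the_equality) force+

lemma complete: assumes I: "invFP dl F P q" and Q: "Q \<subseteq> box" "card Q \<le> q"
  and A1: "card P + 1 + 2*dl \<le> m" and A2: "2*q < (m - card P)^2"
  shows "\<exists>\<pi> x. cons F P Q \<pi> x"
proof -
  note I' = I[unfolded invFP_def]
  have finF: "finite F" using I' finite_box finite_subset by blast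
  have finP: "finite P" using I' finite_box finite_subset by blast
  have finQ: "finite Q" using Q finite_box finite_subset by blast
  have pP: "pinj P" using I' by auto
  have Pb: "P \<subseteq> box" using I' by auto
  define U where "U = {..<m} - fst ` P"
  define V where "V = {..<m} - snd ` P"
  have injf: "inj_on fst P" using pP unfolding pinj_def inj_on_def by (auto simp: prod_eq_iff)
  have injs: "inj_on snd P" using pP unfolding pinj_def inj_on_def by (auto simp: prod_eq_iff)
  have fsub: "fst ` P \<subseteq> {..<m}" "snd ` P \<subseteq> {..<m}" using Pb unfolding box_def by auto
  have cU: "card U = m - card P" unfolding U_def using card_Diff_subset[OF _ fsub(1)] finP card_image[OF injf] by simp
  have cV: "card V = m - card P" unfolding V_def using card_Diff_subset[OF _ fsub(2)] finP card_image[OF injs] by simp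
  have fU: "finite U" "finite V" unfolding U_def V_def by auto
  have "card (F \<union> Q) \<le> card F + card Q" by (rule card_Un_le)
  also have "\<dots> \<le> 2*q" using I' Q by auto
  also have "\<dots> < (m - card P)^2" by (rule A2)
  also have "\<dots> = card (U \<times> V)" using cU cV fU by (simp add: card_cartesian_product power2_eq_square)
  finally have "\<not> U \<times> V \<subseteq> F \<union> Q" using finF finQ by (meson card_mono finite_UnI not_le)
  then obtain x y where xy: "x \<in> U" "y \<in> V" "(x,y) \<notin> F" "(x,y) \<notin> Q" by auto
  define R where "R = U - {x}"
  define C where "C = V - {y}"
  have cR: "card R = m - card P - 1" unfolding R_def using cU xy fU by simp
  have cC: "card C = m - card P - 1" unfolding C_def using cV xy fU by simp
  have fRC: "finite R" "finite C" unfolding R_def C_def using fU by auto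
  have dr: "\<forall>r\<in>R. card {c\<in>C. (r,c)\<in>F} \<le> dl"
  proof
    fix r assume r: "r \<in> R"
    have "card {c\<in>C. (r,c)\<in>F} \<le> rc F r" unfolding rc_def using rc_fin[OF finF] by (intro card_mono) auto
    also have "rc F r \<le> dl" using I' r unfolding R_def U_def by auto
    finally show "card {c\<in>C. (r,c)\<in>F} \<le> dl" .
  qed
  have dc: "\<forall>c\<in>C. card {r\<in>R. (r,c)\<in>F} \<le> dl"
  proof
    fix c assume c: "c \<in> C"
    have "card {r\<in>R. (r,c)\<in>F} \<le> cc F c" unfolding cc_def using cc_fin[OF finF] by (intro card_mono) auto
    also have "cc F c \<le> dl" using I' c unfolding C_def V_def by auto
    finally show "card {r\<in>R. (r,c)\<in>F} \<le> dl" .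
  qed
  have dM: "2*dl \<le> m - card P - 1" using A1 by linarith
  obtain \<mu> where mu: "bij_betw \<mu> R C" "\<forall>r\<in>R. (r, \<mu> r) \<notin> F"
    using matching[OF fRC cR cC dr dc dM] by blast
  define pf where "pf = (\<lambda>a. THE j. (a,j) \<in> P)"
  define \<pi> where "\<pi> = (\<lambda>a. if a \<in> fst ` P then pf a else if a = x then y else \<mu> a)"
  have pfP: "\<And>z. z \<in> P \<Longrightarrow> \<pi> (fst z) = snd z"
  proof -
    fix z assume z: "z \<in> P"
    have "(fst z, snd z) \<in> P" using z by simp
    then have "pf (fst z) = snd z" unfolding pf_def by (rule pinj_the[OF pP])
    then show "\<pi> (fst z) = snd z" unfolding \<pi>_def using z by auto
  qed
  have img_sub: "\<pi> ` {..<m} \<subseteq> {..<m}"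
  proof
    fix v assume "v \<in> \<pi> ` {..<m}"
    then obtain a where a: "a < m" "v = \<pi> a" by auto
    show "v \<in> {..<m}"
    proof (cases "a \<in> fst ` P")
      case True
      then obtain z where z: "z \<in> P" "a = fst z" by auto
      then have "v = snd z" using pfP a by auto
      then show ?thesis using z fsub by auto
    next
      case False
      show ?thesis
      proof (cases "a = x")
        case True then show ?thesis using False a xy unfolding \<pi>_def V_def by auto
      next
        case F2: False
        then have "a \<in> R" using False a unfolding R_def U_def by auto
        then have "\<mu> a \<in> C" using mu(1) unfolding bij_betw_def by auto
        then show ?thesis using False F2 a unfolding \<pi>_def C_def V_def by auto
      qed
    qed
  qed
  have img_sup: "{..<m} \<subseteq> \<pi> ` {..<m}"
  proof
    fix v assume v: "v \<in> {..<m}"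
    show "v \<in> \<pi> ` {..<m}"
    proof (cases "v \<in> snd ` P")
      case True
      then obtain z where z: "z \<in> P" "v = snd z" by auto
      then have "\<pi> (fst z) = v" using pfP by auto
      moreover have "fst z < m" using z fsub by auto
      ultimately show ?thesis by force
    next
      case False
      show ?thesis
      proof (cases "v = y")
        case True
        have "x \<notin> fst ` P" "x < m" using xy unfolding U_def by auto
        then have "\<pi> x = v" unfolding \<pi>_def using True by auto
        then show ?thesis using \<open>x < m\<close> by force
      next
        case F2: False
        then have "v \<in> C" using False v unfolding C_def V_def by auto
        then obtain r where r: "r \<in> R" "\<mu> r = v" using mu(1) unfolding bij_betw_def by force
        then have "r \<notin> fst ` P" "r \<noteq> x" "r < m" unfolding R_def U_def by auto
        then have "\<pi> r = v" unfolding \<pi>_def using r by auto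
        then show ?thesis using \<open>r < m\<close> by force
      qed
    qed
  qed
  have img: "\<pi> ` {..<m} = {..<m}" using img_sub img_sup by blast
  then have "inj_on \<pi> {..<m}" by (simp add: eq_card_imp_inj_on)
  then have perm: "perm \<pi>" unfolding perm_def bij_betw_def using img by auto
  have avoid: "\<forall>a<m. (a, \<pi> a) \<notin> F"
  proof (intro allI impI)
    fix a assume a: "a < m"
    show "(a, \<pi> a) \<notin> F"
    proof (cases "a \<in> fst ` P")
      case True
      then obtain z where z: "z \<in> P" "a = fst z" by auto
      then have "(a, \<pi> a) = z" using pfP by (metis prod.collapse)
      then show ?thesis using z I' by auto
    next
      case False
      show ?thesis
      proof (cases "a = x")
        case True then show ?thesis using False xy unfolding \<pi>_def by auto
      next
        case F2: False
        then have "a \<in> R" using False a unfolding R_def U_def by auto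
        then show ?thesis using mu(2) False F2 unfolding \<pi>_def by auto
      qed
    qed
  qed
  have "x \<notin> fst ` P" "x < m" using xy unfolding U_def by auto
  moreover then have "\<pi> x = y" unfolding \<pi>_def by auto
  ultimately have "cons F P Q \<pi> x" unfolding cons_def using perm avoid pfP xy by auto
  then show ?thesis by blast
qed

lemma off_t: "x < m \<Longrightarrow> off x t q = off x 0 q + (if q = 2*x then t else 0)"
  unfolding off_def by auto

lemma gs_t: assumes "x < m" shows "gs x t p = gs x 0 p + (if 2*x < p then t else 0)"
proof (induction p)
  case 0 then show ?case by (simp add: gs0)
next
  case (Suc p)
  have "gs x t (Suc p) = (gs x 0 p + (if 2*x < p then t else 0)) + (off x 0 p + (if p = 2*x then t else 0))"
    using Suc off_t[OF assms, of t p] by (simp add: gs_Suc)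
  also have "\<dots> = gs x 0 (Suc p) + (if 2*x < Suc p then t else 0)"
    by (cases "2*x < p"; cases "p = 2*x") (simp_all add: gs_Suc)
  finally show ?case .
qed

definition tU :: "nat \<Rightarrow> nat" where "tU x = k - gs x 0 L mod k"
definition tH :: "nat \<Rightarrow> nat" where "tH x = Suc (tU x)"

lemma tU_ok: assumes "x < m" shows "gs x (tU x) L mod k = 0"
proof -
  have "2*x < L" using assms mL by auto
  then have "gs x (tU x) L = gs x 0 L + (k - gs x 0 L mod k)" using gs_t[OF assms, of "tU x" L] unfolding tU_def by simp
  moreover have "((0 + gs x 0 L) mod k + (k - gs x 0 L mod k)) mod k = 0 mod k" by (rule mod_unshift)
  ultimately show ?thesis by (simp add: mod_add_left_eq)
qed

lemma tH_ok: assumes "x < m" shows "gs x (tH x) L mod k = 1"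
proof -
  have "2*x < L" using assms mL by auto
  then have "gs x (tH x) L = (gs x 0 L + (k - gs x 0 L mod k)) + 1" using gs_t[OF assms, of "tH x" L] unfolding tH_def tU_def by simp
  moreover have "gs x 0 L + (k - gs x 0 L mod k) = gs x (tU x) L" using \<open>2*x < L\<close> gs_t[OF assms, of "tU x" L] unfolding tU_def by simp
  ultimately have "gs x (tH x) L = gs x (tU x) L + 1" by simp
  then have "gs x (tH x) L mod k = (gs x (tU x) L mod k + 1) mod k" by (simp only: mod_add_left_eq)
  then show ?thesis using tU_ok[OF assms] k2 by simp
qed

definition Good :: "nat \<Rightarrow> nat \<Rightarrow> bool" where
  "Good dl q' = (\<forall>q\<le>q'. \<forall>C. C \<le> q \<longrightarrow> dl*C \<le> 2*q \<longrightarrow> C + 1 + 2*dl \<le> m \<and> 2*q < (m - C)^2)"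

lemma adv: "dt_vars t \<subseteq> pairs (k*L) \<Longrightarrow> inv dl F P Q q \<Longrightarrow> Good dl (q + dt_depth t) \<Longrightarrow>
  \<exists>\<pi>1 x1 \<pi>2 x2. cons F P Q \<pi>1 x1 \<and> cons F P Q \<pi>2 x2 \<and>
     dt_eval t (\<lambda>e. e \<in> Gr \<pi>1 x1 (tH x1)) = dt_eval t (\<lambda>e. e \<in> Gr \<pi>2 x2 (tU x2))"
proof (induction t arbitrary: F P Q q)
  case (Leaf b)
  have IFP: "invFP dl F P q" and Q: "Q \<subseteq> box" "card Q \<le> q" using Leaf.prems unfolding inv_def by auto
  have c1: "card P \<le> q" using IFP unfolding invFP_def by auto
  have "dl * card P \<le> 2 * card F" by (rule commits[OF IFP])
  also have "card F \<le> q" using IFP unfolding invFP_def by auto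
  finally have c2: "dl * card P \<le> 2 * q" by simp
  have "card P + 1 + 2*dl \<le> m \<and> 2*q < (m - card P)^2" using Leaf.prems(3) c1 c2 unfolding Good_def by auto
  then obtain \<pi> x where "cons F P Q \<pi> x" using complete[OF IFP Q] by blast
  then show ?case by auto
next
  case (Node i t0 t1)
  have i: "i \<in> pairs (k*L)" using Node.prems by auto
  obtain F' P' Q' b where S: "inv dl F' P' Q' (Suc q)" "\<forall>\<pi> x. cons F' P' Q' \<pi> x \<longrightarrow> cons F P Q \<pi> x"
    "\<forall>\<pi> x t. cons F' P' Q' \<pi> x \<longrightarrow> (i \<in> Gr \<pi> x t) = b"
    using query_step[OF Node.prems(2) i] by blast
  have G: "\<And>t'. dt_depth t' \<le> max (dt_depth t0) (dt_depth t1) \<Longrightarrow> Good dl (Suc q + dt_depth t')"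
    using Node.prems(3) unfolding Good_def by auto
  define tb where "tb = (if b then t1 else t0)"
  have V: "dt_vars tb \<subseteq> pairs (k*L)" using Node.prems unfolding tb_def by auto
  have GG: "Good dl (Suc q + dt_depth tb)"
  proof -
    have "dt_depth tb \<le> max (dt_depth t0) (dt_depth t1)" unfolding tb_def by auto
    then show ?thesis by (rule G)
  qed
  have "\<exists>\<pi>1 x1 \<pi>2 x2. cons F' P' Q' \<pi>1 x1 \<and> cons F' P' Q' \<pi>2 x2 \<and>
     dt_eval tb (\<lambda>e. e \<in> Gr \<pi>1 x1 (tH x1)) = dt_eval tb (\<lambda>e. e \<in> Gr \<pi>2 x2 (tU x2))"
  proof (cases b)
    case True
    then have "tb = t1" unfolding tb_def by simp
    then show ?thesis using Node.IH(2)[OF _ S(1)] V GG by simp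
  next
    case False
    then have "tb = t0" unfolding tb_def by simp
    then show ?thesis using Node.IH(1)[OF _ S(1)] V GG by simp
  qed
  then obtain \<pi>1 x1 \<pi>2 x2 where H: "cons F' P' Q' \<pi>1 x1" "cons F' P' Q' \<pi>2 x2"
     "dt_eval tb (\<lambda>e. e \<in> Gr \<pi>1 x1 (tH x1)) = dt_eval tb (\<lambda>e. e \<in> Gr \<pi>2 x2 (tU x2))" by blast
  have b1: "(i \<in> Gr \<pi>1 x1 (tH x1)) = b" "(i \<in> Gr \<pi>2 x2 (tU x2)) = b" using S(3) H by auto
  have "dt_eval (Node i t0 t1) (\<lambda>e. e \<in> Gr \<pi>1 x1 (tH x1)) = dt_eval tb (\<lambda>e. e \<in> Gr \<pi>1 x1 (tH x1))"
    using b1 unfolding tb_def by simp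
  moreover have "dt_eval (Node i t0 t1) (\<lambda>e. e \<in> Gr \<pi>2 x2 (tU x2)) = dt_eval tb (\<lambda>e. e \<in> Gr \<pi>2 x2 (tU x2))"
    using b1 unfolding tb_def by simp
  ultimately have "dt_eval (Node i t0 t1) (\<lambda>e. e \<in> Gr \<pi>1 x1 (tH x1)) = dt_eval (Node i t0 t1) (\<lambda>e. e \<in> Gr \<pi>2 x2 (tU x2))"
    using H(3) by simp
  moreover have "cons F P Q \<pi>1 x1" "cons F P Q \<pi>2 x2" using H(1,2) S(2) by auto
  ultimately show ?case by blast
qed

end

lemma arith_good:
  fixes m L q C :: nat
  assumes m1: "1 \<le> m" and Lm: "L \<le> 2*m+2" and q: "128*q < L^2" and C: "C \<le> q" and dC: "(m div 4)*C \<le> 2*q"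
  shows "C + 1 + 2*(m div 4) \<le> m \<and> 2*q < (m - C)^2"
proof -
  define d where "d = m div 4"
  have md: "4*d \<le> m" "m \<le> 4*d + 3" unfolding d_def by auto
  have "L^2 \<le> (2*m+2)^2" using Lm by (rule power_mono) simp
  also have "(2*m+2)^2 = 4*(m+1)^2" by (simp add: power2_eq_square algebra_simps)
  finally have h1: "32*q < (m+1)^2" using q by linarith
  show ?thesis
  proof (cases "d = 0")
    case True
    then have "m \<le> 3" using md by auto
    then have "(m+1)^2 \<le> 4^2" by (intro power_mono) auto
    then have "q = 0" using h1 by auto
    then have "C = 0" using C by auto
    then show ?thesis using True m1 \<open>q = 0\<close> unfolding d_def by auto
  next
    case False
    then have d1: "1 \<le> d" by auto
    have "(m+1)^2 \<le> (4*d+4)^2" using md by (intro power_mono) auto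
    also have "(4*d+4)^2 = 16*(d+1)^2" by (simp add: power2_eq_square algebra_simps)
    finally have h2: "2*q < (d+1)^2" using h1 by linarith
    have dC': "d*C \<le> 2*q" using dC unfolding d_def .
    have Cb: "C \<le> d + 2"
    proof (rule ccontr)
      assume "\<not> C \<le> d + 2"
      then have "d*(d+3) \<le> d*C" by (intro mult_le_mono2) auto
      then have "d*(d+3) < (d+1)^2" using dC' h2 by linarith
      moreover have "d*(d+3) = d*d + 3*d" "(d+1)^2 = d*d + 2*d + 1" by (simp_all add: power2_eq_square algebra_simps)
      ultimately show False using d1 by linarith
    qed
    have g1: "C + 1 + 2*d \<le> m"
    proof (cases "3 \<le> d")
      case True then show ?thesis using Cb md by linarith
    next
      case F3: False
      then consider "d = 1" | "d = 2" using d1 by linarith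
      then show ?thesis
      proof cases
        case 1
        then have "(m+1)^2 \<le> 8^2" using md by (intro power_mono) auto
        then have "q \<le> 1" using h1 by auto
        then show ?thesis using C md 1 by linarith
      next
        case 2
        show ?thesis
        proof (cases "m = 8")
          case True
          then have "q \<le> 2" using h1 by auto
          then show ?thesis using C True 2 by linarith
        next
          case False
          then show ?thesis using Cb md 2 by linarith
        qed
      qed
    qed
    have "d + 1 \<le> m - C" using g1 by linarith
    then have "(d+1)^2 \<le> (m - C)^2" by (rule power_mono) simp
    then have "2*q < (m - C)^2" using h2 by linarith
    then show ?thesis using g1 unfolding d_def by auto
  qed
qed


fun mk :: "'i list \<Rightarrow> (('i \<Rightarrow> bool) \<Rightarrow> bool) \<Rightarrow> 'i dtree" where
  "mk [] f = Leaf (f (\<lambda>_. False))"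
| "mk (i # xs) f = Node i (mk xs (\<lambda>x. f (x(i := False)))) (mk xs (\<lambda>x. f (x(i := True))))"

lemma mk_eval: "dt_eval (mk xs f) x = f (\<lambda>e. e \<in> set xs \<and> x e)"
proof (induction xs arbitrary: f)
  case Nil then show ?case by simp
next
  case (Cons i xs)
  have e: "(\<lambda>e. e \<in> set xs \<and> x e)(i := x i) = (\<lambda>e. e \<in> set (i # xs) \<and> x e)" by (rule ext) auto
  show ?case
  proof (cases "x i")
    case True
    then have "dt_eval (mk (i # xs) f) x = f ((\<lambda>e. e \<in> set xs \<and> x e)(i := x i))" using Cons by simp
    then show ?thesis using e by simp
  next
    case False
    then have "dt_eval (mk (i # xs) f) x = f ((\<lambda>e. e \<in> set xs \<and> x e)(i := x i))" using Cons by simp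
    then show ?thesis using e by simp
  qed
qed

lemma mk_vars: "dt_vars (mk xs f) \<subseteq> set xs"
  by (induction xs arbitrary: f) auto

lemma tree_exists: assumes "finite I" shows "\<exists>t. dt_vars t \<subseteq> I \<and> (\<forall>x\<in>cube I. dt_eval t x = f x)"
proof -
  obtain xs where xs: "set xs = I" using finite_list[OF assms] by blast
  have "\<forall>x\<in>cube I. dt_eval (mk xs f) x = f x"
  proof
    fix x assume "x \<in> cube I"
    then have "(\<lambda>e. e \<in> set xs \<and> x e) = x" using xs unfolding cube_def by auto
    then show "dt_eval (mk xs f) x = f x" by (simp add: mk_eval)
  qed
  moreover have "dt_vars (mk xs f) \<subseteq> I" using mk_vars[of xs f] xs by simp
  ultimately show ?thesis by blast
qed

lemma finite_pairs: "finite (pairs n)"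
proof -
  have "pairs n \<subseteq> Pow {1..n}" unfolding pairs_def by auto
  moreover have "finite (Pow {1..n})" by simp
  ultimately show ?thesis by (rule finite_subset)
qed

theorem theorem4p5:
  fixes n k :: nat
  assumes "2 \<le> k" and "k dvd n" and "3 * k \<le> n"
  shows "real (Dpartial (pairs n) (Delta_1vK n k) (one_v_k_cycle n))
           \<ge> real n ^ 2 / (128 * real k ^ 2)"
proof -
  define L where "L = n div k"
  have nkL: "n = k * L" unfolding L_def using assms(2) by simp
  have "k*3 \<le> k*L" using assms(3) nkL by (simp add: mult.commute)
  then have L3: "3 \<le> L" using assms(1) by simp
  define m where "m = (L - 1) div 2"
  have lay: "lay k L m" unfolding lay_def m_def using assms(1) L3 by auto
  interpret lay k L m by (rule lay)
  define dl where "dl = m div 4"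
  define D0 where "D0 = Dpartial (pairs n) (Delta_1vK n k) (one_v_k_cycle n)"
  have "\<exists>f. (\<forall>x\<in>Delta_1vK n k. f x = one_v_k_cycle n x) \<and> Dtotal (pairs n) f = D0"
    unfolding D0_def Dpartial_def
    by (rule LeastI_ex) (rule exI[of _ "Dtotal (pairs n) (one_v_k_cycle n)"], auto)
  then obtain f where f: "\<forall>x\<in>Delta_1vK n k. f x = one_v_k_cycle n x" "Dtotal (pairs n) f = D0" by blast
  obtain t0 where t0: "dt_vars t0 \<subseteq> pairs n" "\<forall>x\<in>cube (pairs n). dt_eval t0 x = f x"
    using tree_exists[OF finite_pairs] by blast
  have "\<exists>t. dt_vars t \<subseteq> pairs n \<and> dt_depth t = (LEAST d. \<exists>t. dt_vars t \<subseteq> pairs n \<and> dt_depth t = d \<and>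
                              (\<forall>x\<in>cube (pairs n). dt_eval t x = f x)) \<and> (\<forall>x\<in>cube (pairs n). dt_eval t x = f x)"
    by (rule LeastI_ex) (rule exI[of _ "dt_depth t0"], rule exI[of _ t0], use t0 in simp)
  then have "\<exists>t. dt_vars t \<subseteq> pairs n \<and> dt_depth t = D0 \<and> (\<forall>x\<in>cube (pairs n). dt_eval t x = f x)"
    using f(2) unfolding Dtotal_def by simp
  then obtain t where t: "dt_vars t \<subseteq> pairs n" "dt_depth t = D0" "\<forall>x\<in>cube (pairs n). dt_eval t x = f x"
    by blast
  have main: "L^2 \<le> 128 * D0"
  proof (rule ccontr)
    assume "\<not> L^2 \<le> 128 * D0"
    then have lt: "128 * D0 < L^2" by simp
    have good: "Good dl (0 + dt_depth t)" unfolding Good_def dl_def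
    proof (intro allI impI)
      fix q C assume a: "q \<le> 0 + dt_depth t" "C \<le> q" "m div 4 * C \<le> 2 * q"
      have "128 * q < L^2" using lt t(2) a(1) by linarith
      then show "C + 1 + 2 * (m div 4) \<le> m \<and> 2 * q < (m - C)^2"
        by (rule arith_good[OF m1 Lm _ a(2) a(3)])
    qed
    have inv0: "inv dl {} {} {} 0" unfolding inv_def invFP_def pinj_def box_def rc_def cc_def by auto
    obtain \<pi>1 x1 \<pi>2 x2 where H: "cons {} {} {} \<pi>1 x1" "cons {} {} {} \<pi>2 x2"
      "dt_eval t (\<lambda>e. e \<in> Gr \<pi>1 x1 (tH x1)) = dt_eval t (\<lambda>e. e \<in> Gr \<pi>2 x2 (tU x2))"
    proof -
      have "dt_vars t \<subseteq> pairs (k*L)" using t(1) nkL by simp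
      from adv[OF this inv0 good] show ?thesis using that by blast
    qed
    have p1: "perm \<pi>1" "x1 < m" "perm \<pi>2" "x2 < m" using H unfolding cons_def by auto
    define G1 where "G1 = (\<lambda>e. e \<in> Gr \<pi>1 x1 (tH x1))"
    define G2 where "G2 = (\<lambda>e. e \<in> Gr \<pi>2 x2 (tU x2))"
    have h1: "ham_cycle n G1" unfolding G1_def nkL using ham_ok[OF p1(1) tH_ok[OF p1(2)]] .
    have u2: "union_of_cycles n k (n div k) G2"
    proof -
      have "union_of_cycles (k*L) k L G2" unfolding G2_def by (rule union_ok[OF p1(3) tU_ok[OF p1(4)]])
      moreover have "n div k = L" unfolding L_def ..
      ultimately show ?thesis using nkL by simp
    qed
    have nh2: "\<not> ham_cycle n G2" unfolding ham_cycle_def using union_not_ham[OF assms(1) u2] .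
    have c1: "G1 \<in> cube (pairs n)" unfolding G1_def nkL using gx_cube[OF p1(1)] .
    have c2: "G2 \<in> cube (pairs n)" unfolding G2_def nkL using gx_cube[OF p1(3)] .
    have d1: "G1 \<in> Delta_1vK n k" unfolding Delta_1vK_def using h1 by auto
    have d2: "G2 \<in> Delta_1vK n k" unfolding Delta_1vK_def using u2 by auto
    have "f G1 = True" using f(1) d1 h1 unfolding one_v_k_cycle_def by auto
    moreover have "f G2 = False" using f(1) d2 nh2 unfolding one_v_k_cycle_def by auto
    moreover have "dt_eval t G1 = f G1" "dt_eval t G2 = f G2" using t(3) c1 c2 by auto
    ultimately show False using H(3) unfolding G1_def G2_def by simp
  qed
  have k0: "0 < real k" using assms(1) by simp
  have "real n ^ 2 / (128 * real k ^ 2) = real L ^ 2 / 128"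
    using k0 unfolding nkL by (simp add: field_simps power2_eq_square)
  also have "\<dots> \<le> real D0" using main by (simp add: field_simps) (metis of_nat_le_iff of_nat_mult of_nat_numeral of_nat_power)
  finally show ?thesis unfolding D0_def .
qed


end
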